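(* Let $\nu(dx)=e^{-W(x)}dx$ be a probability measure on $\mathbb R^d$ with $W\in C^1$, and $L_W=\Delta-\nabla W\cdot\nabla$. Assume there exist constants $b,R>0$, a positive continuous function $\phi$ and a $C^2$ function $F\ge1$ with $\frac{L_WF}{F}\le-\phi+b\mathbf 1_{B(0,R)}$. Let $U$ be smooth such that $\mu=e^{-U}\nu$ is a probability measure, and assume that $\phi_U(x)=\phi(x)+\frac{\langle\nabla U(x),\nabla F(x)\rangle}{F(x)}>0$ for all $|x|$ large enough. Set $h_U(r)=e^{-\inf_{\{\phi_U\le1/r\}}U}\,\nu(\phi_U\le1/r)$. Then there exists a constant $C>0$ such that $\mu$ satisfies a weak Poincaré inequality with rate $\beta_\mu(s)=C\,h_U^{-1}(s)$.
   Context: A probability measure $\mu$ on $\mathbb R^d$ satisfies a weak Poincaré inequality with rate $\beta_\mu$ if $\beta_\mu:(0,\infty)\to(0,\infty]$ is non-increasing and for all $s>0$ and all smooth bounded $f$, $\mathrm{Var}_\mu(f)\le \beta_\mu(s)\int|\nabla f|^2d\mu+s\,\mathrm{Osc}^2(f)$, where $\mathrm{Osc}(f)=\sup f-\inf f$. $h_U^{-1}$ denotes the generalized inverse of the non-increasing function $h_U$. *)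

theory Defs
  imports "HOL-Probability.Probability"
begin

definition pd :: "('a::euclidean_space \<Rightarrow> real) \<Rightarrow> 'a \<Rightarrow> 'a \<Rightarrow> real" where
  "pd f i x = frechet_derivative f (at x) i"

definition grad :: "('a::euclidean_space \<Rightarrow> real) \<Rightarrow> 'a \<Rightarrow> 'a" where
  "grad f x = (\<Sum>i\<in>Basis. pd f i x *\<^sub>R i)"

definition lap :: "('a::euclidean_space \<Rightarrow> real) \<Rightarrow> 'a \<Rightarrow> real" where
  "lap f x = (\<Sum>i\<in>Basis. pd (pd f i) i x)"

definition LW :: "('a::euclidean_space \<Rightarrow> real) \<Rightarrow> ('a \<Rightarrow> real) \<Rightarrow> 'a \<Rightarrow> real" where
  "LW W f x = lap f x - grad W x \<bullet> grad f x"

fun Ck :: "nat \<Rightarrow> ('a::euclidean_space \<Rightarrow> real) \<Rightarrow> bool" where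
  "Ck 0 f = continuous_on UNIV f"
| "Ck (Suc k) f = ((\<forall>x. f differentiable (at x)) \<and> continuous_on UNIV f \<and> (\<forall>i\<in>Basis. Ck k (pd f i)))"

definition smooth :: "('a::euclidean_space \<Rightarrow> real) \<Rightarrow> bool" where
  "smooth f = (\<forall>k. Ck k f)"

definition Osc :: "('a \<Rightarrow> real) \<Rightarrow> real" where
  "Osc f = Sup (range f) - Inf (range f)"

definition Var :: "'a measure \<Rightarrow> ('a \<Rightarrow> real) \<Rightarrow> real" where
  "Var M f = (\<integral>x. (f x - (\<integral>y. f y \<partial>M))\<^sup>2 \<partial>M)"

definition weak_poincare :: "'a::euclidean_space measure \<Rightarrow> (real \<Rightarrow> ennreal) \<Rightarrow> bool" where
  "weak_poincare M \<beta> \<longleftrightarrow>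
     (\<forall>s t. 0 < s \<longrightarrow> s \<le> t \<longrightarrow> \<beta> t \<le> \<beta> s) \<and>
     (\<forall>s>0. \<forall>f. smooth f \<and> bounded (range f) \<longrightarrow>
        ennreal (Var M f) \<le> \<beta> s * (\<integral>\<^sup>+x. ennreal ((norm (grad f x))\<^sup>2) \<partial>M)
                             + ennreal (s * (Osc f)\<^sup>2))"

text \<open>h_U(r) = exp(- inf_{phi_U <= 1/r} U) * nu(phi_U <= 1/r); note exp(-inf U) = sup exp(-U),
  with the conventions exp(-(+\<infinity>)) = 0 for the empty set and exp(-(-\<infinity>)) = \<infinity>.\<close>
definition hU :: "'a measure \<Rightarrow> ('a \<Rightarrow> real) \<Rightarrow> ('a \<Rightarrow> real) \<Rightarrow> real \<Rightarrow> ennreal" where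
  "hU \<nu> U \<phi>U r = (SUP x\<in>{x. \<phi>U x \<le> 1 / r}. ennreal (exp (- U x))) * emeasure \<nu> {x. \<phi>U x \<le> 1 / r}"

text \<open>Generalized inverse of a non-increasing function h on (0,\<infinity>): inf {r>0. h r \<le> s}
  (= \<infinity> if the set is empty).\<close>
definition gen_inv :: "(real \<Rightarrow> ennreal) \<Rightarrow> real \<Rightarrow> ennreal" where
  "gen_inv h s = (INF r\<in>{r. 0 < r \<and> h r \<le> ennreal s}. ennreal r)"

end

theory Submission
  imports Defs
begin

lemma grad_inner_Basis: "i \<in> Basis \<Longrightarrow> grad f x \<bullet> i = pd f i x"
  by (simp add: grad_def inner_sum_left inner_Basis if_distrib cong: if_cong)

lemma has_derivative_grad:
  assumes "f differentiable (at x)"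
  shows "(f has_derivative (\<lambda>v. grad f x \<bullet> v)) (at x)"
proof -
  let ?D = "frechet_derivative f (at x)"
  have d: "(f has_derivative ?D) (at x)" using assms frechet_derivative_works by blast
  have lin: "linear ?D" using d has_derivative_linear by blast
  have "?D v = grad f x \<bullet> v" for v
  proof -
    have "?D v = ?D (\<Sum>i\<in>Basis. (v \<bullet> i) *\<^sub>R i)" by (simp add: euclidean_representation)
    also have "\<dots> = (\<Sum>i\<in>Basis. (v \<bullet> i) * ?D i)"
      using lin by (simp add: linear_sum linear_scale)
    also have "\<dots> = grad f x \<bullet> v"
      by (simp add: grad_def pd_def inner_sum_right mult.commute inner_commute)
    finally show ?thesis .
  qed
  then have "?D = (\<lambda>v. grad f x \<bullet> v)" by auto
  with d show ?thesis by simp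
qed

lemma Ck_Suc_mono: "Ck (Suc k) f \<Longrightarrow> Ck k f"
proof (induction k arbitrary: f)
  case 0 then show ?case by simp
next
  case (Suc k) then show ?case by auto
qed

lemma Ck1_D:
  assumes "Ck 1 f"
  shows "\<And>x. (f has_derivative (\<lambda>v. grad f x \<bullet> v)) (at x)"
    and "continuous_on UNIV f"
    and "\<And>i. i \<in> Basis \<Longrightarrow> continuous_on UNIV (pd f i)"
    and "continuous_on UNIV (grad f)"
proof -
  from assms have A: "\<forall>x. f differentiable (at x)" "continuous_on UNIV f" "\<forall>i\<in>Basis. continuous_on UNIV (pd f i)"
    by auto
  show "\<And>x. (f has_derivative (\<lambda>v. grad f x \<bullet> v)) (at x)" using A has_derivative_grad by blast
  show "continuous_on UNIV f" using A by blast
  show "\<And>i. i \<in> Basis \<Longrightarrow> continuous_on UNIV (pd f i)" using A by blast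
  show "continuous_on UNIV (grad f)"
    unfolding grad_def[abs_def] using A by (intro continuous_intros) auto
qed

lemma smooth_Ck1: "smooth f \<Longrightarrow> Ck 1 f" by (simp add: smooth_def)

lemma Ck2_D: assumes "Ck 2 F" shows "Ck 1 F" "\<And>i. i\<in>Basis \<Longrightarrow> Ck 1 (pd F i)"
  using assms by (auto simp: numeral_2_eq_2 simp del: Ck.simps(2) intro: Ck_Suc_mono) (simp_all add: numeral_2_eq_2)


lemma cont_bounded_outside:
  fixes g :: "'a::euclidean_space \<Rightarrow> real"
  assumes "continuous_on UNIV g" "\<And>x. norm x > T \<Longrightarrow> g x = 0"
  obtains M where "M \<ge> 0" "\<And>x. \<bar>g x\<bar> \<le> M"
proof -
  have "compact (g ` cball 0 T)"
    by (rule compact_continuous_image) (auto intro: continuous_on_subset[OF assms(1)])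
  then obtain M where M: "\<And>y. y \<in> g ` cball 0 T \<Longrightarrow> norm y \<le> M"
    using compact_imp_bounded bounded_iff by metis
  have "\<bar>g x\<bar> \<le> max M 0" for x
    using M[of "g x"] assms(2)[of x] by (cases "norm x \<le> T") auto
  then show ?thesis using that[of "max M 0"] by auto
qed

lemma integral_deriv_zero:
  fixes h :: "'a::euclidean_space \<Rightarrow> real"
  assumes deriv: "\<And>x. (h has_derivative h' x) (at x)"
    and cont: "continuous_on UNIV (\<lambda>x. h' x v)"
    and supp: "\<And>x. norm x \<ge> T \<Longrightarrow> h x = 0"
  shows "(\<integral>x. h' x v \<partial>lborel) = 0"
proof -
  have hcont: "continuous_on UNIV h"
    using deriv by (meson continuous_at_imp_continuous_on has_derivative_continuous)
  have lin: "linear (h' x)" for x using deriv has_derivative_linear by blast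
  have zero': "h' x v = 0" if "norm x > T" for x
  proof -
    have "(h has_derivative (\<lambda>_. 0)) (at x)"
      by (rule has_derivative_transform_within_open[where f="\<lambda>_. 0" and s="{y. norm y > T}"])
         (auto intro: open_Collect_less continuous_intros that supp)
    then have "h' x = (\<lambda>_. 0)" using has_derivative_unique deriv by blast
    then show ?thesis by simp
  qed
  obtain M where M0: "M \<ge> 0" and M: "\<And>x. \<bar>h' x v\<bar> \<le> M"
    using cont_bounded_outside[OF cont zero'] by blast
  have hint: "integrable lborel h"
  proof -
    have "integrable lborel (\<lambda>x. indicator (cball 0 T) x *\<^sub>R h x)"
      by (rule borel_integrable_compact) (auto intro: continuous_on_subset[OF hcont])
    moreover have "(\<lambda>x. indicator (cball 0 T) x *\<^sub>R h x) = h"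
      using supp by (auto simp: indicator_def fun_eq_iff)
    ultimately show ?thesis by simp
  qed
  have transl: "(\<integral>x. h (x + c) \<partial>lborel) = (\<integral>x. h x \<partial>lborel)" for c :: 'a
  proof -
    have "(\<integral>x. h x \<partial>lborel) = (\<integral>x. h x \<partial>distr lborel borel ((+) c))"
      by (simp add: lborel_distr_plus)
    also have "\<dots> = (\<integral>x. h (c + x) \<partial>lborel)"
      by (rule integral_distr) (auto intro: borel_measurable_continuous_onI hcont)
    finally show ?thesis by (simp add: add.commute)
  qed
  define t :: "nat \<Rightarrow> real" where "t n = 1 / Suc n" for n
  have tpos: "t n > 0" "t n \<le> 1" for n by (auto simp: t_def field_simps)
  define s where "s n x = (h (x + t n *\<^sub>R v) - h x) / t n" for n x
  have int0: "(\<integral>x. s n x \<partial>lborel) = 0" for n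
  proof -
    have i2: "integrable lborel (\<lambda>x. h (x + t n *\<^sub>R v))"
    proof -
      have "integrable (distr lborel borel ((+) (t n *\<^sub>R v))) h"
        by (simp add: lborel_distr_plus hint)
      then show ?thesis
        by (subst (asm) integrable_distr_eq) (auto intro: borel_measurable_continuous_onI hcont simp: add.commute)
    qed
    have "(\<integral>x. s n x \<partial>lborel) = ((\<integral>x. h (x + t n *\<^sub>R v) \<partial>lborel) - (\<integral>x. h x \<partial>lborel)) / t n"
      unfolding s_def by (simp add: Bochner_Integration.integral_diff[OF i2 hint])
    then show ?thesis by (simp add: transl)
  qed
  have Hder: "((\<lambda>\<tau>. h (x + \<tau> *\<^sub>R v)) has_real_derivative h' (x + \<tau> *\<^sub>R v) v) (at \<tau>)" for x \<tau>
  proof -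
    have "((\<lambda>\<tau>. h (x + \<tau> *\<^sub>R v)) has_derivative (\<lambda>d. h' (x + \<tau> *\<^sub>R v) (d *\<^sub>R v))) (at \<tau>)"
      by (rule has_derivative_compose[of "\<lambda>\<tau>. x + \<tau> *\<^sub>R v" "\<lambda>d. d *\<^sub>R v", OF _ deriv, simplified])
         (auto intro!: derivative_eq_intros)
    moreover have "h' (x + \<tau> *\<^sub>R v) (d *\<^sub>R v) = d * h' (x + \<tau> *\<^sub>R v) v" for d
      using lin linear_scale by (simp add: linear_cmul)
    moreover have "(\<lambda>d. d * h' (x + \<tau> *\<^sub>R v) v) = (*) (h' (x + \<tau> *\<^sub>R v) v)"
      by (auto simp: fun_eq_iff)
    ultimately show ?thesis by (simp add: has_field_derivative_def)
  qed
  have lim: "(\<lambda>n. s n x) \<longlonglongrightarrow> h' x v" for x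
  proof -
    have "((\<lambda>\<tau>. (h (x + \<tau> *\<^sub>R v) - h (x + 0 *\<^sub>R v)) / (\<tau> - 0)) \<longlongrightarrow> h' (x + 0 *\<^sub>R v) v) (at 0)"
      using Hder[of x 0] unfolding has_field_derivative_iff by simp
    then have A: "((\<lambda>\<tau>. (h (x + \<tau> *\<^sub>R v) - h x) / \<tau>) \<longlongrightarrow> h' x v) (at 0)" by simp
    have B: "filterlim t (at 0) sequentially"
      unfolding filterlim_at
    proof
      show "\<forall>\<^sub>F n in sequentially. t n \<in> UNIV \<and> t n \<noteq> 0"
        using tpos by (intro always_eventually) (metis UNIV_I less_irrefl)
      show "t \<longlonglongrightarrow> 0" unfolding t_def using LIMSEQ_inverse_real_of_nat by (simp add: inverse_eq_divide)
    qed
    show ?thesis unfolding s_def using filterlim_compose[OF A B] by simp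
  qed
  have bound: "\<bar>s n x\<bar> \<le> M * indicator (cball 0 (T + norm v)) x" for n x
  proof (cases "norm x \<le> T + norm v")
    case True
    obtain z where "0 < z" "z < t n" and eq: "h (x + t n *\<^sub>R v) - h (x + 0 *\<^sub>R v) = (t n - 0) * h' (x + z *\<^sub>R v) v"
      using MVT2[of 0 "t n" "\<lambda>\<tau>. h (x + \<tau> *\<^sub>R v)" "\<lambda>\<tau>. h' (x + \<tau> *\<^sub>R v) v"] Hder tpos by blast
    then have "s n x = h' (x + z *\<^sub>R v) v" using tpos[of n] by (simp add: s_def)
    then show ?thesis using True M by simp
  next
    case False
    then have "norm x \<ge> T" using norm_ge_zero[of v] by linarith
    moreover have "norm (x + t n *\<^sub>R v) \<ge> T"
    proof -
      have "norm (t n *\<^sub>R v) \<le> norm v" using tpos[of n] by (simp add: mult_left_le_one_le)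
      then show ?thesis using False norm_triangle_ineq2[of x "- (t n *\<^sub>R v)"] by simp
    qed
    ultimately show ?thesis using supp M0 by (simp add: s_def)
  qed
  have "(\<lambda>n. \<integral>x. s n x \<partial>lborel) \<longlonglongrightarrow> (\<integral>x. h' x v \<partial>lborel)"
  proof (rule integral_dominated_convergence[where w="\<lambda>x. M * indicator (cball 0 (T + norm v)) x"])
    show "(\<lambda>x. h' x v) \<in> borel_measurable lborel" using cont by (simp add: borel_measurable_continuous_onI)
    show "s n \<in> borel_measurable lborel" for n
    proof -
      have "continuous_on UNIV (\<lambda>x. (h (x + t n *\<^sub>R v) - h x) / t n)"
        using tpos(1)[of n] by (intro continuous_intros continuous_on_compose2[OF hcont]) auto
      then show ?thesis unfolding s_def[abs_def] measurable_lborel2 by (rule borel_measurable_continuous_onI)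
    qed
    show "integrable lborel (\<lambda>x. M * indicator (cball 0 (T + norm v)) x)"
      by (intro integrable_mult_right integrable_real_indicator emeasure_compact_finite) auto
    show "AE x in lborel. (\<lambda>n. s n x) \<longlonglongrightarrow> h' x v" using lim by simp
    show "AE x in lborel. norm (s n x) \<le> M * indicator (cball 0 (T + norm v)) x" for n using bound by simp
  qed
  then show ?thesis using int0 LIMSEQ_unique by (simp add: LIMSEQ_const_iff)
qed


lemma integrable_cont_supp:
  fixes k :: "'a::euclidean_space \<Rightarrow> real"
  assumes "continuous_on UNIV k" "\<And>x. norm x > T \<Longrightarrow> k x = 0"
  shows "integrable lborel k"
proof -
  have "integrable lborel (\<lambda>x. indicator (cball 0 T) x *\<^sub>R k x)"
    by (rule borel_integrable_compact) (auto intro: continuous_on_subset[OF assms(1)])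
  moreover have "(\<lambda>x. indicator (cball 0 T) x *\<^sub>R k x) = k"
    using assms(2) by (auto simp: indicator_def fun_eq_iff)
  ultimately show ?thesis by simp
qed

lemma deriv_zero_outside:
  fixes g :: "'a::euclidean_space \<Rightarrow> real"
  assumes "\<And>x. (g has_derivative (\<lambda>v. G x \<bullet> v)) (at x)" "\<And>x. norm x \<ge> T \<Longrightarrow> g x = 0"
    and "norm x > T"
  shows "G x = 0"
proof -
  have "(g has_derivative (\<lambda>_. 0)) (at x)"
    by (rule has_derivative_transform_within_open[where f="\<lambda>_. 0" and s="{y. norm y > T}"])
       (auto intro: open_Collect_less continuous_intros assms)
  then have "(\<lambda>v. G x \<bullet> v) = (\<lambda>_. 0)" using has_derivative_unique assms(1) by blast
  then have "G x \<bullet> G x = 0" by metis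
  then show ?thesis by simp
qed

lemma ibp_lyap:
  fixes W U F g :: "'a::euclidean_space \<Rightarrow> real" and G :: "'a \<Rightarrow> 'a"
  assumes W: "Ck 1 W" and U: "Ck 1 U" and F: "Ck 2 F" and Fpos: "\<And>x. F x > 0"
    and gd: "\<And>x. (g has_derivative (\<lambda>v. G x \<bullet> v)) (at x)" and Gc: "continuous_on UNIV G"
    and gs: "\<And>x. norm x \<ge> T \<Longrightarrow> g x = 0"
  shows "(\<integral>x. exp (- U x) * exp (- W x) * (g x ^ 2 * (- (LW W F x - grad U x \<bullet> grad F x) / F x)) \<partial>lborel)
     \<le> (\<integral>x. exp (- U x) * exp (- W x) * (norm (G x))\<^sup>2 \<partial>lborel)"
proof -
  have Fne: "\<And>x. F x \<noteq> 0" using Fpos by (metis less_irrefl)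
  define \<rho> where "\<rho> x = exp (- U x) * exp (- W x)" for x
  have F1: "Ck 1 F" and Fi: "\<And>i. i \<in> Basis \<Longrightarrow> Ck 1 (pd F i)" using Ck2_D[OF F] by auto
  note Ud = Ck1_D[OF U] and Wd = Ck1_D[OF W] and Fd = Ck1_D[OF F1]
  have gc: "continuous_on UNIV g"
    using gd by (meson continuous_at_imp_continuous_on has_derivative_continuous)
  have \<rho>d: "(\<rho> has_derivative (\<lambda>v. - \<rho> x * ((grad U x + grad W x) \<bullet> v))) (at x)" for x
    unfolding \<rho>_def[abs_def]
    by (rule derivative_eq_intros Ud(1) Wd(1) refl | simp)+ (simp add: algebra_simps inner_add_left fun_eq_iff)
  have \<rho>c: "continuous_on UNIV \<rho>" unfolding \<rho>_def[abs_def] using Ud(2) Wd(2) by (intro continuous_intros)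
  define D where "D i x v = 2 * g x * (G x \<bullet> v) * \<rho> x * pd F i x / F x
      - g x ^ 2 * \<rho> x * ((grad U x + grad W x) \<bullet> v) * pd F i x / F x
      + g x ^ 2 * \<rho> x * (grad (pd F i) x \<bullet> v) / F x
      - g x ^ 2 * \<rho> x * pd F i x * (grad F x \<bullet> v) / (F x)^2" for i x v
  define h where "h i x = g x ^ 2 * \<rho> x * pd F i x / F x" for i x
  have hd: "(h i has_derivative D i x) (at x)" if i: "i \<in> Basis" for i x
  proof -
    note pd1 = Ck1_D(1)[OF Fi[OF i]]
    have "((\<lambda>x. g x ^ 2 * \<rho> x * pd F i x / F x) has_derivative D i x) (at x)"
      apply (rule has_derivative_eq_rhs)
       apply (rule derivative_eq_intros gd \<rho>d pd1 Fd(1) refl | simp add: Fne)+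
      apply (simp add: D_def fun_eq_iff field_simps power2_eq_square)
      apply (simp add: add_divide_distrib diff_divide_distrib)
      done
    then show ?thesis unfolding h_def[abs_def] .
  qed
  have Dc: "continuous_on UNIV (\<lambda>x. D i x i)" if i: "i \<in> Basis" for i
    unfolding D_def using Ck1_D(4)[OF Fi[OF i]] Ck1_D(2)[OF Fi[OF i]] Fd(2) Fd(4) Ud(4) Wd(4) gc Gc \<rho>c Fpos
    by (intro continuous_intros) (auto simp: Fne)
  have Gz: "G x = 0" if "norm x > T" for x using deriv_zero_outside[OF gd gs that] .
  have hs: "h i x = 0" if "norm x \<ge> T" for i x using gs[OF that] by (simp add: h_def)
  have Dz: "D i x v = 0" if "norm x > T" for i x v using gs[of x] that Gz[OF that] by (simp add: D_def)
  have intD: "integrable lborel (\<lambda>x. D i x i)" if "i \<in> Basis" for i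
    using integrable_cont_supp[OF Dc[OF that] Dz] .
  have zero: "(\<integral>x. D i x i \<partial>lborel) = 0" if "i \<in> Basis" for i
    using integral_deriv_zero[OF hd[OF that] Dc[OF that] hs] .
  have sumzero: "(\<integral>x. (\<Sum>i\<in>Basis. D i x i) \<partial>lborel) = 0"
    using zero intD by (simp add: integral_sum)
  define A where "A x = \<rho> x * (2 * g x * (G x \<bullet> grad F x) / F x - g x ^ 2 * (norm (grad F x))\<^sup>2 / (F x)^2)" for x
  have key: "\<rho> x * (g x ^ 2 * (- (LW W F x - grad U x \<bullet> grad F x) / F x)) = A x - (\<Sum>i\<in>Basis. D i x i)" for x
  proof -
    have s1: "(\<Sum>i\<in>Basis. (G x \<bullet> i) * pd F i x) = G x \<bullet> grad F x"
      by (simp add: euclidean_inner[of "G x" "grad F x"] grad_inner_Basis)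
    have s2: "(\<Sum>i\<in>Basis. ((grad U x + grad W x) \<bullet> i) * pd F i x) = (grad U x + grad W x) \<bullet> grad F x"
      by (simp add: euclidean_inner[of "grad U x + grad W x" "grad F x"] grad_inner_Basis)
    have s3: "(\<Sum>i\<in>Basis. grad (pd F i) x \<bullet> i) = lap F x"
      by (simp add: lap_def grad_inner_Basis)
    have s4: "(\<Sum>i\<in>Basis. pd F i x * (grad F x \<bullet> i)) = (norm (grad F x))\<^sup>2"
      by (simp add: power2_norm_eq_inner euclidean_inner[of "grad F x" "grad F x"] grad_inner_Basis)
    have "(\<Sum>i\<in>Basis. D i x i) = 2 * g x * \<rho> x / F x * (\<Sum>i\<in>Basis. (G x \<bullet> i) * pd F i x)
       - g x ^ 2 * \<rho> x / F x * (\<Sum>i\<in>Basis. ((grad U x + grad W x) \<bullet> i) * pd F i x)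
       + g x ^ 2 * \<rho> x / F x * (\<Sum>i\<in>Basis. grad (pd F i) x \<bullet> i)
       - g x ^ 2 * \<rho> x / (F x)^2 * (\<Sum>i\<in>Basis. pd F i x * (grad F x \<bullet> i))"
      unfolding D_def sum_distrib_left sum_subtractf[symmetric] sum.distrib[symmetric]
      by (rule sum.cong) (auto simp: field_simps)
    also have "\<dots> = 2 * g x * \<rho> x / F x * (G x \<bullet> grad F x)
       - g x ^ 2 * \<rho> x / F x * ((grad U x + grad W x) \<bullet> grad F x)
       + g x ^ 2 * \<rho> x / F x * lap F x
       - g x ^ 2 * \<rho> x / (F x)^2 * (norm (grad F x))\<^sup>2" by (simp only: s1 s2 s3 s4)
    finally show ?thesis
      by (simp add: A_def LW_def field_simps inner_add_left power2_eq_square) (simp add: add_divide_distrib diff_divide_distrib)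
  qed
  have Ac: "continuous_on UNIV A"
    unfolding A_def using Fd(2) Fd(4) gc Gc \<rho>c Fpos
    by (intro continuous_intros) (auto simp: Fne)
  have Az: "A x = 0" if "norm x > T" for x using gs[of x] that by (simp add: A_def)
  have intA: "integrable lborel A" using integrable_cont_supp[OF Ac Az] .
  have intG: "integrable lborel (\<lambda>x. \<rho> x * (norm (G x))\<^sup>2)"
    using \<rho>c Gc Gz by (intro integrable_cont_supp[of _ T]) (auto intro!: continuous_intros)
  have Ale: "A x \<le> \<rho> x * (norm (G x))\<^sup>2" for x
  proof -
    have "0 \<le> (norm (G x - (g x / F x) *\<^sub>R grad F x))\<^sup>2" by simp
    also have "\<dots> = (norm (G x))\<^sup>2 - 2 * (g x / F x) * (G x \<bullet> grad F x) + (g x / F x)^2 * (norm (grad F x))\<^sup>2"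
      unfolding power2_norm_eq_inner by (simp add: inner_diff_left inner_diff_right inner_commute power2_eq_square algebra_simps)
    finally have "2 * g x * (G x \<bullet> grad F x) / F x - g x ^ 2 * (norm (grad F x))\<^sup>2 / (F x)^2 \<le> (norm (G x))\<^sup>2"
      by (simp add: power_divide field_simps)
    moreover have "\<rho> x > 0" by (simp add: \<rho>_def)
    ultimately show ?thesis unfolding A_def by (simp add: mult_left_mono)
  qed
  have sumint: "integrable lborel (\<lambda>x. \<Sum>i\<in>Basis. D i x i)" using intD by simp
  have "(\<integral>x. \<rho> x * (g x ^ 2 * (- (LW W F x - grad U x \<bullet> grad F x) / F x)) \<partial>lborel)
      = (\<integral>x. A x \<partial>lborel) - (\<integral>x. (\<Sum>i\<in>Basis. D i x i) \<partial>lborel)"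
    by (simp only: key Bochner_Integration.integral_diff[OF intA sumint])
  also have "\<dots> = (\<integral>x. A x \<partial>lborel)" using sumzero by simp
  also have "\<dots> \<le> (\<integral>x. \<rho> x * (norm (G x))\<^sup>2 \<partial>lborel)"
    by (rule integral_mono[OF intA intG Ale])
  finally show ?thesis unfolding \<rho>_def .
qed


lemma segment_bound:
  fixes f :: "'a::euclidean_space \<Rightarrow> real" and G :: "'a \<Rightarrow> 'a"
  assumes fd: "\<And>x. (f has_derivative (\<lambda>v. G x \<bullet> v)) (at x)" and Gc: "continuous_on UNIV G"
  shows "(f y - f x)\<^sup>2 \<le> (norm (y - x))\<^sup>2 * (\<integral>t. indicator {0..1} t * (norm (G (x + t *\<^sub>R (y - x))))\<^sup>2 \<partial>lborel)"
proof -
  define \<gamma>' where "\<gamma>' t = G (x + t *\<^sub>R (y - x)) \<bullet> (y - x)" for t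
  have gc: "continuous_on UNIV (\<lambda>t::real. G (x + t *\<^sub>R (y - x)))"
    by (intro continuous_on_compose2[OF Gc] continuous_intros) auto
  have \<gamma>'c: "continuous_on UNIV \<gamma>'" unfolding \<gamma>'_def using gc by (intro continuous_intros)
  have der: "((\<lambda>t. f (x + t *\<^sub>R (y - x))) has_real_derivative \<gamma>' t) (at t)" for t
  proof -
    have "((\<lambda>t. f (x + t *\<^sub>R (y - x))) has_derivative (\<lambda>d. G (x + t *\<^sub>R (y - x)) \<bullet> (d *\<^sub>R (y - x)))) (at t)"
    proof -
      have "((\<lambda>t. x + t *\<^sub>R (y - x)) has_derivative (\<lambda>d. d *\<^sub>R (y - x))) (at t)"
        by (auto intro!: derivative_eq_intros)
      then show ?thesis by (rule has_derivative_compose[OF _ fd])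
    qed
    moreover have "(\<lambda>d. G (x + t *\<^sub>R (y - x)) \<bullet> (d *\<^sub>R (y - x))) = (*) (\<gamma>' t)"
      by (auto simp: fun_eq_iff \<gamma>'_def)
    ultimately show ?thesis by (simp add: has_field_derivative_def)
  qed
  have ftc: "(\<integral>t. indicator {0..1} t *\<^sub>R \<gamma>' t \<partial>lborel) = f y - f x"
    using integral_FTC_atLeastAtMost[of 0 1 "\<lambda>t. f (x + t *\<^sub>R (y - x))" \<gamma>']
      der \<gamma>'c by (auto simp: has_real_derivative_iff_has_vector_derivative[symmetric]
        intro: has_field_derivative_at_within continuous_on_subset)
  have int1: "integrable lborel (\<lambda>t. indicator {0..1} t * \<gamma>' t)"
    using borel_integrable_atLeastAtMost'[of 0 1 \<gamma>'] \<gamma>'c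
    by (auto simp: set_integrable_def intro: continuous_on_subset)
  have int2: "integrable lborel (\<lambda>t. indicator {0..1} t * (\<gamma>' t)\<^sup>2)"
    using borel_integrable_atLeastAtMost'[of 0 1 "\<lambda>t. (\<gamma>' t)\<^sup>2"] \<gamma>'c
    by (auto simp: set_integrable_def intro: continuous_on_subset continuous_intros)
  have int0: "integrable lborel (\<lambda>t. indicator {0..1::real} t :: real)"
    by (rule integrable_real_indicator) auto
  have m01: "(\<integral>t. indicator {0..1::real} t \<partial>lborel) = (1::real)" by simp
  define a where "a = f y - f x"
  have a: "(\<integral>t. indicator {0..1} t * \<gamma>' t \<partial>lborel) = a" using ftc by (simp add: a_def)
  have "0 \<le> (\<integral>t. indicator {0..1} t * (\<gamma>' t - a)\<^sup>2 \<partial>lborel)"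
    by (intro integral_nonneg_AE) auto
  also have "(\<integral>t. indicator {0..1} t * (\<gamma>' t - a)\<^sup>2 \<partial>lborel)
      = (\<integral>t. indicator {0..1} t * (\<gamma>' t)\<^sup>2 - 2 * a * (indicator {0..1} t * \<gamma>' t) + a\<^sup>2 * indicator {0..1} t \<partial>lborel)"
    by (rule Bochner_Integration.integral_cong) (auto simp: power2_eq_square algebra_simps)
  also have "\<dots> = (\<integral>t. indicator {0..1} t * (\<gamma>' t)\<^sup>2 \<partial>lborel) - 2 * a * a + a\<^sup>2"
    using int0 int1 int2 a m01 by simp
  finally have cs: "a\<^sup>2 \<le> (\<integral>t. indicator {0..1} t * (\<gamma>' t)\<^sup>2 \<partial>lborel)" by (simp add: power2_eq_square)
  have int3: "integrable lborel (\<lambda>t. indicator {0..1} t * (norm (G (x + t *\<^sub>R (y - x))))\<^sup>2)"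
  proof -
    have "continuous_on UNIV (\<lambda>t. (norm (G (x + t *\<^sub>R (y - x))))\<^sup>2)"
      using gc by (intro continuous_intros)
    then show ?thesis
      using borel_integrable_atLeastAtMost'[of 0 1 "\<lambda>t. (norm (G (x + t *\<^sub>R (y - x))))\<^sup>2"]
      by (auto simp: set_integrable_def intro: continuous_on_subset)
  qed
  have "(\<integral>t. indicator {0..1} t * (\<gamma>' t)\<^sup>2 \<partial>lborel)
      \<le> (\<integral>t. (norm (y - x))\<^sup>2 * (indicator {0..1} t * (norm (G (x + t *\<^sub>R (y - x))))\<^sup>2) \<partial>lborel)"
  proof (rule integral_mono[OF int2])
    show "integrable lborel (\<lambda>t. (norm (y - x))\<^sup>2 * (indicator {0..1} t * (norm (G (x + t *\<^sub>R (y - x))))\<^sup>2))"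
      using int3 by simp
    fix t
    have "\<bar>\<gamma>' t\<bar> \<le> norm (G (x + t *\<^sub>R (y - x))) * norm (y - x)"
      unfolding \<gamma>'_def by (rule Cauchy_Schwarz_ineq2)
    then have "(\<gamma>' t)\<^sup>2 \<le> (norm (G (x + t *\<^sub>R (y - x))) * norm (y - x))\<^sup>2"
      by (metis abs_ge_zero abs_le_square_iff abs_mult abs_norm_cancel)
    then show "indicator {0..1} t * (\<gamma>' t)\<^sup>2 \<le> (norm (y - x))\<^sup>2 * (indicator {0..1} t * (norm (G (x + t *\<^sub>R (y - x))))\<^sup>2)"
      by (auto simp: indicator_def power_mult_distrib mult.commute)
  qed
  also have "\<dots> = (norm (y - x))\<^sup>2 * (\<integral>t. indicator {0..1} t * (norm (G (x + t *\<^sub>R (y - x))))\<^sup>2 \<partial>lborel)"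
    by simp
  finally show ?thesis using cs a_def by simp
qed

lemma nn_integral_affine:
  fixes k :: "'a::euclidean_space \<Rightarrow> ennreal"
  assumes k: "k \<in> borel_measurable borel" and c: "c \<noteq> 0"
  shows "(\<integral>\<^sup>+y. k (a + c *\<^sub>R y) \<partial>lborel) = ennreal (1 / \<bar>c\<bar> ^ DIM('a)) * (\<integral>\<^sup>+y. k y \<partial>lborel)"
proof -
  note k[measurable]
  have "(\<integral>\<^sup>+y. k y \<partial>lborel) = (\<integral>\<^sup>+y. k y \<partial>density (distr lborel borel (\<lambda>x. a + c *\<^sub>R x)) (\<lambda>_. \<bar>c\<bar>^DIM('a)))"
    using lborel_affine[OF c, of a] by simp
  also have "\<dots> = (\<integral>\<^sup>+y. ennreal (\<bar>c\<bar>^DIM('a)) * k y \<partial>distr lborel borel (\<lambda>x. a + c *\<^sub>R x))"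
    by (subst nn_integral_density) auto
  also have "\<dots> = (\<integral>\<^sup>+y. ennreal (\<bar>c\<bar>^DIM('a)) * k (a + c *\<^sub>R y) \<partial>lborel)"
    by (subst nn_integral_distr) simp_all
  also have "\<dots> = ennreal (\<bar>c\<bar>^DIM('a)) * (\<integral>\<^sup>+y. k (a + c *\<^sub>R y) \<partial>lborel)"
    by (rule nn_integral_cmult) (simp add: k)
  finally have eq: "(\<integral>\<^sup>+y. k y \<partial>lborel) = ennreal (\<bar>c\<bar>^DIM('a)) * (\<integral>\<^sup>+y. k (a + c *\<^sub>R y) \<partial>lborel)" .
  have pos: "\<bar>c\<bar>^DIM('a) > 0" using c by simp
  have "ennreal (1 / \<bar>c\<bar> ^ DIM('a)) * ennreal (\<bar>c\<bar>^DIM('a)) = 1"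
    using pos by (simp add: ennreal_mult'[symmetric])
  then show ?thesis unfolding eq by (simp add: mult.assoc[symmetric])
qed


lemma aux_scale:
  fixes H :: "'a::euclidean_space \<Rightarrow> real" and B :: "'a set"
  assumes H[measurable]: "H \<in> borel_measurable borel" and Hnn: "\<And>z. H z \<ge> 0"
    and s: "1/2 \<le> s" "s \<le> 1"
  shows "(\<integral>\<^sup>+y. ennreal (indicator B y * H (a + s *\<^sub>R y)) \<partial>lborel) \<le> ennreal (2^DIM('a)) * (\<integral>\<^sup>+z. ennreal (H z) \<partial>lborel)"
proof -
  have "(\<integral>\<^sup>+y. ennreal (indicator B y * H (a + s *\<^sub>R y)) \<partial>lborel) \<le> (\<integral>\<^sup>+y. ennreal (H (a + s *\<^sub>R y)) \<partial>lborel)"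
    using Hnn by (intro nn_integral_mono) (auto simp: indicator_def)
  also have "\<dots> = ennreal (1 / \<bar>s\<bar> ^ DIM('a)) * (\<integral>\<^sup>+z. ennreal (H z) \<partial>lborel)"
    using s by (intro nn_integral_affine[where k="\<lambda>z. ennreal (H z)"]) auto
  also have "\<dots> \<le> ennreal (2^DIM('a)) * (\<integral>\<^sup>+z. ennreal (H z) \<partial>lborel)"
  proof (rule mult_right_mono)
    have "1 / \<bar>s\<bar> ^ DIM('a) = (1 / s) ^ DIM('a)" using s by (simp add: power_one_over)
    also have "\<dots> \<le> 2 ^ DIM('a)" using s by (intro power_mono) (auto simp: field_simps)
    finally show "ennreal (1 / \<bar>s\<bar> ^ DIM('a)) \<le> ennreal (2 ^ DIM('a))" by (rule ennreal_leI)
  qed simp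
  finally show ?thesis .
qed

lemma Q_bound:
  fixes H :: "'a::euclidean_space \<Rightarrow> real" and B :: "'a set"
  assumes H[measurable]: "H \<in> borel_measurable borel" and Hnn: "\<And>z. H z \<ge> 0"
    and B[measurable]: "B \<in> sets borel" and t: "0 \<le> t" "t \<le> 1"
  shows "(\<integral>\<^sup>+x. \<integral>\<^sup>+y. ennreal (indicator B x * indicator B y * H (x + t *\<^sub>R (y - x))) \<partial>lborel \<partial>lborel)
     \<le> emeasure lborel B * (ennreal (2^DIM('a)) * (\<integral>\<^sup>+z. ennreal (H z) \<partial>lborel))"
proof (cases "t \<ge> 1/2")
  case True
  have "(\<integral>\<^sup>+x. \<integral>\<^sup>+y. ennreal (indicator B x * indicator B y * H (x + t *\<^sub>R (y - x))) \<partial>lborel \<partial>lborel)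
     \<le> (\<integral>\<^sup>+x. indicator B x * (ennreal (2^DIM('a)) * (\<integral>\<^sup>+z. ennreal (H z) \<partial>lborel)) \<partial>lborel)"
  proof (rule nn_integral_mono)
    fix x
    show "(\<integral>\<^sup>+y. ennreal (indicator B x * indicator B y * H (x + t *\<^sub>R (y - x))) \<partial>lborel)
      \<le> indicator B x * (ennreal (2^DIM('a)) * (\<integral>\<^sup>+z. ennreal (H z) \<partial>lborel))"
    proof (cases "x \<in> B")
      case True
      have "(\<integral>\<^sup>+y. ennreal (indicator B x * indicator B y * H (x + t *\<^sub>R (y - x))) \<partial>lborel)
          = (\<integral>\<^sup>+y. ennreal (indicator B y * H ((1 - t) *\<^sub>R x + t *\<^sub>R y)) \<partial>lborel)"
        using True by (intro nn_integral_cong) (simp add: algebra_simps)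
      also have "\<dots> \<le> ennreal (2^DIM('a)) * (\<integral>\<^sup>+z. ennreal (H z) \<partial>lborel)"
        using \<open>t \<ge> 1/2\<close> t by (intro aux_scale) (auto simp: Hnn)
      finally show ?thesis using True by simp
    qed simp
  qed
  also have "\<dots> = emeasure lborel B * (ennreal (2^DIM('a)) * (\<integral>\<^sup>+z. ennreal (H z) \<partial>lborel))"
    by (subst nn_integral_multc) auto
  finally show ?thesis .
next
  case False
  have "(\<integral>\<^sup>+x. \<integral>\<^sup>+y. ennreal (indicator B x * indicator B y * H (x + t *\<^sub>R (y - x))) \<partial>lborel \<partial>lborel)
      = (\<integral>\<^sup>+y. \<integral>\<^sup>+x. ennreal (indicator B x * indicator B y * H (x + t *\<^sub>R (y - x))) \<partial>lborel \<partial>lborel)"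
    by (rule lborel_pair.Fubini'[symmetric]) measurable
  also have "\<dots> \<le> (\<integral>\<^sup>+y. indicator B y * (ennreal (2^DIM('a)) * (\<integral>\<^sup>+z. ennreal (H z) \<partial>lborel)) \<partial>lborel)"
  proof (rule nn_integral_mono)
    fix y
    show "(\<integral>\<^sup>+x. ennreal (indicator B x * indicator B y * H (x + t *\<^sub>R (y - x))) \<partial>lborel)
      \<le> indicator B y * (ennreal (2^DIM('a)) * (\<integral>\<^sup>+z. ennreal (H z) \<partial>lborel))"
    proof (cases "y \<in> B")
      case True
      have "(\<integral>\<^sup>+x. ennreal (indicator B x * indicator B y * H (x + t *\<^sub>R (y - x))) \<partial>lborel)
          = (\<integral>\<^sup>+x. ennreal (indicator B x * H (t *\<^sub>R y + (1 - t) *\<^sub>R x)) \<partial>lborel)"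
        using True by (intro nn_integral_cong) (simp add: algebra_simps)
      also have "\<dots> \<le> ennreal (2^DIM('a)) * (\<integral>\<^sup>+z. ennreal (H z) \<partial>lborel)"
        using False t by (intro aux_scale) (auto simp: Hnn)
      finally show ?thesis using True by simp
    qed simp
  qed
  also have "\<dots> = emeasure lborel B * (ennreal (2^DIM('a)) * (\<integral>\<^sup>+z. ennreal (H z) \<partial>lborel))"
    by (subst nn_integral_multc) auto
  finally show ?thesis .
qed


lemma poincare_cball:
  fixes f :: "'a::euclidean_space \<Rightarrow> real" and G :: "'a \<Rightarrow> 'a"
  assumes fd: "\<And>x. (f has_derivative (\<lambda>v. G x \<bullet> v)) (at x)" and Gc: "continuous_on UNIV G"
    and r: "r > 0"
  shows "(\<integral>x. indicator (cball 0 r) x * (f x - (\<integral>y. indicator (cball 0 r) y * f y \<partial>lborel) / measure lborel (cball (0::'a) r))\<^sup>2 \<partial>lborel)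
        \<le> 4 * r\<^sup>2 * 2 ^ DIM('a) * (\<integral>x. indicator (cball 0 r) x * (norm (G x))\<^sup>2 \<partial>lborel)"
proof -
  define B where "B = cball (0::'a) r"
  define mB where "mB = measure lborel B"
  have Bm[measurable]: "B \<in> sets borel" unfolding B_def by simp
  have mBpos: "mB > 0" unfolding mB_def B_def using r by simp
  have emB: "emeasure lborel B = ennreal mB"
    unfolding mB_def B_def by (rule emeasure_eq_ennreal_measure) (use emeasure_compact_finite[of "cball (0::'a) r"] in \<open>simp add: less_top\<close>)
  have fc: "continuous_on UNIV f"
    using fd by (meson continuous_at_imp_continuous_on has_derivative_continuous)
  have Gm[measurable]: "G \<in> borel_measurable borel" using Gc by (rule borel_measurable_continuous_onI)
  have fm[measurable]: "f \<in> borel_measurable borel" using fc by (rule borel_measurable_continuous_onI)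
  have intB: "integrable lborel (\<lambda>x. indicator B x * g x)" if "continuous_on UNIV g" for g :: "'a \<Rightarrow> real"
    using borel_integrable_compact[of B g] that unfolding B_def by (auto intro: continuous_on_subset)
  have iB: "integrable lborel (\<lambda>x. indicator B x :: real)" using intB[of "\<lambda>_. 1"] by simp
  have i1: "integrable lborel (\<lambda>x. indicator B x * f x)" using intB[OF fc] .
  have i2: "integrable lborel (\<lambda>x. indicator B x * (f x)\<^sup>2)" by (rule intB, intro continuous_intros fc)
  have iG: "integrable lborel (\<lambda>x. indicator B x * (norm (G x))\<^sup>2)" by (rule intB, intro continuous_intros Gc)
  define If where "If = (\<integral>y. indicator B y * f y \<partial>lborel)"
  define If2 where "If2 = (\<integral>y. indicator B y * (f y)\<^sup>2 \<partial>lborel)"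
  define IG where "IG = (\<integral>y. indicator B y * (norm (G y))\<^sup>2 \<partial>lborel)"
  have mB_int: "(\<integral>y. indicator B y \<partial>lborel) = mB" by (simp add: mB_def)
  define k where "k x = indicator B x * (mB * (f x)\<^sup>2 - 2 * f x * If + If2)" for x
  have inner_int: "(\<integral>y. indicator B x * indicator B y * (f x - f y)\<^sup>2 \<partial>lborel) = k x" for x
  proof -
    have "(\<lambda>y. indicator B x * indicator B y * (f x - f y)\<^sup>2) =
      (\<lambda>y. indicator B x * ((f x)\<^sup>2 * indicator B y - 2 * f x * (indicator B y * f y) + indicator B y * (f y)\<^sup>2))"
      by (auto simp: fun_eq_iff power2_eq_square algebra_simps)
    then show ?thesis using iB i1 i2 mB_int by (simp add: k_def If_def If2_def)
  qed
  have inner_i: "integrable lborel (\<lambda>y. indicator B x * indicator B y * (f x - f y)\<^sup>2)" for x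
  proof -
    have "integrable lborel (\<lambda>y. indicator B y * (indicator B x * (f x - f y)\<^sup>2))"
      by (rule intB, intro continuous_intros fc)
    then show ?thesis by (simp add: mult.assoc mult.left_commute)
  qed
  have knn: "k x \<ge> 0" for x unfolding inner_int[symmetric] by (rule integral_nonneg_AE) auto
  have inner_nn: "(\<integral>\<^sup>+y. ennreal (indicator B x * indicator B y * (f x - f y)\<^sup>2) \<partial>lborel) = ennreal (k x)" for x
    using nn_integral_eq_integral[OF inner_i[of x]] inner_int[of x] by simp
  have ik: "integrable lborel k"
  proof -
    have "k = (\<lambda>x. mB * (indicator B x * (f x)\<^sup>2) - 2 * If * (indicator B x * f x) + If2 * indicator B x)"
      by (auto simp: fun_eq_iff k_def algebra_simps)
    then show ?thesis using iB i1 i2 by simp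
  qed
  define J where "J = mB * If2 - 2 * If * If + If2 * mB"
  have intk: "(\<integral>x. k x \<partial>lborel) = J"
  proof -
    have "k = (\<lambda>x. mB * (indicator B x * (f x)\<^sup>2) - 2 * If * (indicator B x * f x) + If2 * indicator B x)"
      by (auto simp: fun_eq_iff k_def algebra_simps)
    then show ?thesis using iB i1 i2 mB_int by (simp add: J_def If_def If2_def)
  qed
  have LHS2: "(\<integral>\<^sup>+x. \<integral>\<^sup>+y. ennreal (indicator B x * indicator B y * (f x - f y)\<^sup>2) \<partial>lborel \<partial>lborel) = ennreal J"
    using nn_integral_eq_integral[OF ik] knn intk by (simp add: inner_nn)
  define H where "H z = indicator B z * (norm (G z))\<^sup>2" for z
  have Hm[measurable]: "H \<in> borel_measurable borel" unfolding H_def[abs_def] by measurable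
  have Hnn: "H z \<ge> 0" for z by (simp add: H_def)
  have IGnn: "IG \<ge> 0" unfolding IG_def by (rule integral_nonneg_AE) auto
  define \<Phi> where "\<Phi> x y t = ennreal (indicator B x * indicator B y * (indicator {0..1} t * H (x + t *\<^sub>R (y - x))))" for x y t
  have \<Phi>m[measurable]: "(\<lambda>(x, y, t). \<Phi> x y t) \<in> borel_measurable (lborel \<Otimes>\<^sub>M lborel \<Otimes>\<^sub>M lborel)"
    unfolding \<Phi>_def by measurable
  have pw: "ennreal (indicator B x * indicator B y * (f x - f y)\<^sup>2) \<le> ennreal (4 * r\<^sup>2) * (\<integral>\<^sup>+t. \<Phi> x y t \<partial>lborel)" for x y
  proof (cases "x \<in> B \<and> y \<in> B")
    case True
    have seg: "x + t *\<^sub>R (y - x) \<in> B" if "t \<in> {0..1}" for t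
      using convexD_alt[of B x y t] True that unfolding B_def by (auto simp: algebra_simps)
    have gc: "continuous_on UNIV (\<lambda>t. (norm (G (x + t *\<^sub>R (y - x))))\<^sup>2)"
      by (intro continuous_intros continuous_on_compose2[OF Gc]) auto
    have it: "integrable lborel (\<lambda>t. indicator {0..1} t * (norm (G (x + t *\<^sub>R (y - x))))\<^sup>2)"
      using borel_integrable_atLeastAtMost'[of 0 1 "\<lambda>t. (norm (G (x + t *\<^sub>R (y - x))))\<^sup>2"] gc
      by (auto simp: set_integrable_def intro: continuous_on_subset)
    have "(\<integral>\<^sup>+t. \<Phi> x y t \<partial>lborel) = (\<integral>\<^sup>+t. ennreal (indicator {0..1} t * (norm (G (x + t *\<^sub>R (y - x))))\<^sup>2) \<partial>lborel)"
      using True seg by (intro nn_integral_cong) (auto simp: \<Phi>_def H_def indicator_def)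
    also have "\<dots> = ennreal (\<integral>t. indicator {0..1} t * (norm (G (x + t *\<^sub>R (y - x))))\<^sup>2 \<partial>lborel)"
      by (rule nn_integral_eq_integral[OF it]) auto
    finally have eqt: "(\<integral>\<^sup>+t. \<Phi> x y t \<partial>lborel) = ennreal (\<integral>t. indicator {0..1} t * (norm (G (x + t *\<^sub>R (y - x))))\<^sup>2 \<partial>lborel)" .
    have nyx: "norm (y - x) \<le> 2 * r" using True unfolding B_def
      using norm_triangle_ineq4[of y x] by auto
    have "(f x - f y)\<^sup>2 = (f y - f x)\<^sup>2" by (simp add: power2_commute)
    also have "\<dots> \<le> (norm (y - x))\<^sup>2 * (\<integral>t. indicator {0..1} t * (norm (G (x + t *\<^sub>R (y - x))))\<^sup>2 \<partial>lborel)"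
      by (rule segment_bound[OF fd Gc])
    also have "\<dots> \<le> (4 * r\<^sup>2) * (\<integral>t. indicator {0..1} t * (norm (G (x + t *\<^sub>R (y - x))))\<^sup>2 \<partial>lborel)"
    proof (rule mult_right_mono)
      show "(norm (y - x))\<^sup>2 \<le> 4 * r\<^sup>2" using power_mono[OF nyx norm_ge_zero, of 2] by (simp add: power_mult_distrib)
    qed (auto intro: integral_nonneg_AE)
    finally have "(f x - f y)\<^sup>2 \<le> 4 * r\<^sup>2 * (\<integral>t. indicator {0..1} t * (norm (G (x + t *\<^sub>R (y - x))))\<^sup>2 \<partial>lborel)" .
    then show ?thesis using True unfolding eqt
      by (simp add: ennreal_mult''[symmetric] integral_nonneg_AE)
  qed (auto simp: indicator_def)
  have "ennreal J \<le> (\<integral>\<^sup>+x. \<integral>\<^sup>+y. ennreal (4 * r\<^sup>2) * (\<integral>\<^sup>+t. \<Phi> x y t \<partial>lborel) \<partial>lborel \<partial>lborel)"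
    unfolding LHS2[symmetric] by (intro nn_integral_mono pw)
  also have "\<dots> = ennreal (4 * r\<^sup>2) * (\<integral>\<^sup>+x. \<integral>\<^sup>+y. \<integral>\<^sup>+t. \<Phi> x y t \<partial>lborel \<partial>lborel \<partial>lborel)"
  proof -
    have m2: "(\<lambda>y. \<integral>\<^sup>+t. \<Phi> x y t \<partial>lborel) \<in> borel_measurable lborel" for x
      unfolding \<Phi>_def by measurable
    have m1: "(\<lambda>x. \<integral>\<^sup>+y. \<integral>\<^sup>+t. \<Phi> x y t \<partial>lborel \<partial>lborel) \<in> borel_measurable lborel"
      unfolding \<Phi>_def by measurable
    have "(\<integral>\<^sup>+x. \<integral>\<^sup>+y. ennreal (4 * r\<^sup>2) * (\<integral>\<^sup>+t. \<Phi> x y t \<partial>lborel) \<partial>lborel \<partial>lborel)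
      = (\<integral>\<^sup>+x. ennreal (4 * r\<^sup>2) * (\<integral>\<^sup>+y. \<integral>\<^sup>+t. \<Phi> x y t \<partial>lborel \<partial>lborel) \<partial>lborel)"
      by (intro nn_integral_cong nn_integral_cmult m2)
    also have "\<dots> = ennreal (4 * r\<^sup>2) * (\<integral>\<^sup>+x. \<integral>\<^sup>+y. \<integral>\<^sup>+t. \<Phi> x y t \<partial>lborel \<partial>lborel \<partial>lborel)"
      by (rule nn_integral_cmult[OF m1])
    finally show ?thesis .
  qed
  finally have Jtri: "ennreal J \<le> ennreal (4 * r\<^sup>2) * (\<integral>\<^sup>+x. \<integral>\<^sup>+y. \<integral>\<^sup>+t. \<Phi> x y t \<partial>lborel \<partial>lborel \<partial>lborel)" .
  have TB: "(\<integral>\<^sup>+x. \<integral>\<^sup>+y. \<integral>\<^sup>+t. \<Phi> x y t \<partial>lborel \<partial>lborel \<partial>lborel)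
      \<le> emeasure lborel B * (ennreal (2^DIM('a)) * ennreal IG)"
  proof -
  have "(\<integral>\<^sup>+x. \<integral>\<^sup>+y. \<integral>\<^sup>+t. \<Phi> x y t \<partial>lborel \<partial>lborel \<partial>lborel)
      = (\<integral>\<^sup>+x. \<integral>\<^sup>+t. \<integral>\<^sup>+y. \<Phi> x y t \<partial>lborel \<partial>lborel \<partial>lborel)"
  proof (rule nn_integral_cong)
    fix x
    show "(\<integral>\<^sup>+y. \<integral>\<^sup>+t. \<Phi> x y t \<partial>lborel \<partial>lborel) = (\<integral>\<^sup>+t. \<integral>\<^sup>+y. \<Phi> x y t \<partial>lborel \<partial>lborel)"
      by (rule lborel_pair.Fubini'[symmetric]) (unfold \<Phi>_def, measurable)
  qed
  also have "\<dots> = (\<integral>\<^sup>+t. \<integral>\<^sup>+x. \<integral>\<^sup>+y. \<Phi> x y t \<partial>lborel \<partial>lborel \<partial>lborel)"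
    by (rule lborel_pair.Fubini'[symmetric]) (unfold \<Phi>_def, measurable)
  also have "\<dots> \<le> (\<integral>\<^sup>+t. indicator {0..1::real} t * (emeasure lborel B * (ennreal (2^DIM('a)) * (\<integral>\<^sup>+z. ennreal (H z) \<partial>lborel))) \<partial>lborel)"
  proof (rule nn_integral_mono)
    fix t :: real
    show "(\<integral>\<^sup>+x. \<integral>\<^sup>+y. \<Phi> x y t \<partial>lborel \<partial>lborel) \<le> indicator {0..1} t * (emeasure lborel B * (ennreal (2^DIM('a)) * (\<integral>\<^sup>+z. ennreal (H z) \<partial>lborel)))"
    proof (cases "t \<in> {0..1}")
      case True
      then have "(\<integral>\<^sup>+x. \<integral>\<^sup>+y. \<Phi> x y t \<partial>lborel \<partial>lborel) = (\<integral>\<^sup>+x. \<integral>\<^sup>+y. ennreal (indicator B x * indicator B y * H (x + t *\<^sub>R (y - x))) \<partial>lborel \<partial>lborel)"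
        by (simp add: \<Phi>_def)
      also have "\<dots> \<le> emeasure lborel B * (ennreal (2^DIM('a)) * (\<integral>\<^sup>+z. ennreal (H z) \<partial>lborel))"
        using True by (intro Q_bound Hm Hnn Bm) auto
      finally show ?thesis using True by simp
    qed (simp add: \<Phi>_def)
  qed
  also have "\<dots> = emeasure lborel B * (ennreal (2^DIM('a)) * (\<integral>\<^sup>+z. ennreal (H z) \<partial>lborel))"
    by (subst nn_integral_multc) auto
  also have "(\<integral>\<^sup>+z. ennreal (H z) \<partial>lborel) = ennreal IG"
    unfolding H_def IG_def by (rule nn_integral_eq_integral[OF iG]) auto
  finally show ?thesis .
  qed
  have "ennreal J \<le> ennreal (4 * r\<^sup>2) * (emeasure lborel B * (ennreal (2^DIM('a)) * ennreal IG))"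
    using Jtri by (rule order_trans) (rule mult_left_mono[OF TB], simp)
  then have "ennreal J \<le> ennreal (4 * r\<^sup>2) * (ennreal mB * (ennreal (2^DIM('a)) * ennreal IG))"
    using emB by simp
  also have "\<dots> = ennreal (4 * r\<^sup>2 * mB * 2^DIM('a) * IG)"
    using IGnn mBpos by (simp add: ennreal_mult[symmetric] mult.assoc)
  finally have Jle: "J \<le> 4 * r\<^sup>2 * mB * 2^DIM('a) * IG"
    using mBpos IGnn by (subst (asm) ennreal_le_iff) (auto intro!: mult_nonneg_nonneg)
  define c where "c = If / mB"
  have "(\<lambda>x. indicator B x * (f x - c)\<^sup>2) = (\<lambda>x. indicator B x * (f x)\<^sup>2 - 2 * c * (indicator B x * f x) + c\<^sup>2 * indicator B x)"
    by (auto simp: fun_eq_iff power2_eq_square algebra_simps)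
  then have "(\<integral>x. indicator B x * (f x - c)\<^sup>2 \<partial>lborel) = If2 - 2 * c * If + c\<^sup>2 * mB"
    using iB i1 i2 mB_int by (simp add: If_def If2_def)
  also have "\<dots> = J / (2 * mB)" using mBpos by (simp add: c_def J_def field_simps power2_eq_square)
  also have "\<dots> \<le> 4 * r\<^sup>2 * 2^DIM('a) * IG / 2" using Jle mBpos by (simp add: field_simps)
  also have "\<dots> \<le> 4 * r\<^sup>2 * 2^DIM('a) * IG" using IGnn by simp
  finally show ?thesis unfolding B_def c_def If_def IG_def mB_def .
qed


definition qcut :: "real \<Rightarrow> real" where "qcut u = (max 0 (1 - u))\<^sup>2"

lemma qcut_deriv: "(qcut has_real_derivative (- 2 * max 0 (1 - u))) (at u)"
proof -
  consider "u < 1" | "u > 1" | "u = 1" by linarith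
  then show ?thesis
  proof cases
    case 1
    have ev: "eventually (\<lambda>y. qcut y = (1 - y)\<^sup>2) (nhds u)"
      using eventually_nhds_in_open[of "{..<1}" u] 1 by (auto elim!: eventually_mono simp: qcut_def)
    have "((\<lambda>y. (1 - y)\<^sup>2) has_real_derivative (- 2 * max 0 (1 - u))) (at u)"
      using 1 by (auto intro!: derivative_eq_intros)
    then show ?thesis using DERIV_cong_ev[OF refl ev refl] by simp
  next
    case 2
    have ev: "eventually (\<lambda>y. qcut y = 0) (nhds u)"
      using eventually_nhds_in_open[of "{1<..}" u] 2 by (auto elim!: eventually_mono simp: qcut_def)
    have "((\<lambda>y. 0) has_real_derivative (- 2 * max 0 (1 - u))) (at u)"
      using 2 by (auto intro!: derivative_eq_intros)
    then show ?thesis using DERIV_cong_ev[OF refl ev refl] by simp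
  next
    case 3
    have eq: "(qcut y - qcut 1) / (y - 1) = - max 0 (1 - y)" if "y \<noteq> 1" for y
    proof (cases "y < 1")
      case True
      then show ?thesis using that by (simp add: qcut_def power2_eq_square field_simps)
    next
      case False
      then show ?thesis using that by (simp add: qcut_def)
    qed
    have c0: "((\<lambda>y. - max 0 (1 - y)) \<longlongrightarrow> - max 0 (1 - 1::real)) (at 1)"
      by (intro tendsto_intros)
    then have c: "((\<lambda>y. - max 0 (1 - y)) \<longlongrightarrow> (0::real)) (at 1)" by simp
    have "((\<lambda>y. (qcut y - qcut 1) / (y - 1)) \<longlongrightarrow> 0) (at 1)"
      by (rule Lim_transform_within[OF c zero_less_one]) (auto simp: eq)
    then show ?thesis using 3 by (simp add: has_field_derivative_iff)
  qed
qed

lemma qcut_props: "0 \<le> qcut u" "qcut u \<le> 1 \<or> u < 0" "u \<ge> 1 \<Longrightarrow> qcut u = 0" "0 \<le> u \<Longrightarrow> qcut u \<le> 1"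
  by (auto simp: qcut_def max_def power_le_one)

definition chi :: "real \<Rightarrow> 'a::euclidean_space \<Rightarrow> real" where
  "chi N x = qcut (inverse (N\<^sup>2) * (x \<bullet> x))"

definition gchi :: "real \<Rightarrow> 'a::euclidean_space \<Rightarrow> 'a" where
  "gchi N x = (- 2 * max 0 (1 - inverse (N\<^sup>2) * (x \<bullet> x)) * 2 * inverse (N\<^sup>2)) *\<^sub>R x"

lemma chi_deriv: "(chi N has_derivative (\<lambda>v. gchi N x \<bullet> v)) (at x)"
proof -
  have d1: "((\<lambda>x. inverse (N\<^sup>2) * (x \<bullet> x)) has_derivative (\<lambda>v. inverse (N\<^sup>2) * (x \<bullet> v + v \<bullet> x))) (at x)"
    by (auto intro!: derivative_eq_intros)
  have "((\<lambda>x. qcut (inverse (N\<^sup>2) * (x \<bullet> x))) has_derivative (\<lambda>v. inverse (N\<^sup>2) * (x \<bullet> v + v \<bullet> x) * (- 2 * max 0 (1 - inverse (N\<^sup>2) * (x \<bullet> x))))) (at x)"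
    by (rule DERIV_compose_FDERIV[OF qcut_deriv d1])
  moreover have "(\<lambda>v. inverse (N\<^sup>2) * (x \<bullet> v + v \<bullet> x) * (- 2 * max 0 (1 - inverse (N\<^sup>2) * (x \<bullet> x)))) = (\<lambda>v. gchi N x \<bullet> v)"
    by (auto simp: fun_eq_iff gchi_def inner_commute algebra_simps)
  ultimately show ?thesis unfolding chi_def[abs_def] by simp
qed

lemma gchi_cont: "continuous_on UNIV (gchi N)"
  unfolding gchi_def[abs_def] by (intro continuous_intros)

lemma chi_cont: "continuous_on UNIV (chi N)"
  using chi_deriv by (meson continuous_at_imp_continuous_on has_derivative_continuous)

lemma chi_bounds: "0 \<le> chi N x" "chi N x \<le> 1"
  by (auto simp: chi_def intro: qcut_props)

lemma chi_zero: "N > 0 \<Longrightarrow> norm x \<ge> N \<Longrightarrow> chi N x = 0"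
proof -
  assume N: "N > 0" "norm x \<ge> N"
  have "N\<^sup>2 \<le> (norm x)\<^sup>2" using N by (intro power_mono) auto
  then have "1 \<le> inverse (N\<^sup>2) * (x \<bullet> x)" using N by (simp add: power2_norm_eq_inner field_simps)
  then show ?thesis by (simp add: chi_def qcut_props)
qed

lemma gchi_norm: assumes "N > 0" shows "norm (gchi N x) \<le> 4 / N"
proof (cases "norm x < N")
  case True
  define m where "m = max 0 (1 - inverse (N\<^sup>2) * (x \<bullet> x))"
  have m: "0 \<le> m" "m \<le> 1" unfolding m_def by auto
  have "norm (gchi N x) = 4 * m * inverse (N\<^sup>2) * norm x"
    unfolding gchi_def m_def[symmetric] using m by (simp add: abs_mult)
  also have "\<dots> \<le> 4 * 1 * inverse (N\<^sup>2) * norm x" using m by (intro mult_right_mono) auto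
  also have "\<dots> \<le> 4 * 1 * inverse (N\<^sup>2) * N" using True assms by (intro mult_left_mono) auto
  also have "\<dots> = 4 / N" using assms by (simp add: power2_eq_square field_simps)
  finally show ?thesis .
next
  case False
  then have "N\<^sup>2 \<le> (norm x)\<^sup>2" using assms by (intro power_mono) auto
  then have "1 \<le> inverse (N\<^sup>2) * (x \<bullet> x)" using assms by (simp add: power2_norm_eq_inner field_simps)
  then have "gchi N x = 0" by (simp add: gchi_def)
  then show ?thesis using assms by simp
qed

lemma chi_lim: "(\<lambda>n. chi (real n + 1) x) \<longlonglongrightarrow> 1"
proof -
  have "(\<lambda>n. inverse ((real n + 1)\<^sup>2) * (x \<bullet> x)) \<longlonglongrightarrow> 0"
  proof -
    have "(\<lambda>n. (inverse (real (Suc n)))\<^sup>2 * (x \<bullet> x)) \<longlonglongrightarrow> 0\<^sup>2 * (x \<bullet> x)"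
      by (intro tendsto_intros LIMSEQ_inverse_real_of_nat)
    then show ?thesis by (simp add: power_inverse add.commute)
  qed
  then have "(\<lambda>n. qcut (inverse ((real n + 1)\<^sup>2) * (x \<bullet> x))) \<longlonglongrightarrow> qcut 0"
    by (rule isCont_tendsto_compose[rotated]) (use qcut_deriv in \<open>meson DERIV_isCont\<close>)
  then show ?thesis by (simp add: chi_def qcut_def)
qed


lemma osc_bounds:
  fixes f :: "'a \<Rightarrow> real"
  assumes "bounded (range f)"
  shows "Inf (range f) \<le> f x" "f x \<le> Sup (range f)"
  using assms by (auto intro: cInf_lower cSup_upper bounded_imp_bdd_above bounded_imp_bdd_below)

lemma osc_sq:
  fixes f :: "'a \<Rightarrow> real"
  assumes "bounded (range f)" "Inf (range f) \<le> c" "c \<le> Sup (range f)"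
  shows "(f x - c)\<^sup>2 \<le> (Osc f)\<^sup>2"
proof -
  have "\<bar>f x - c\<bar> \<le> Osc f" using osc_bounds[OF assms(1), of x] assms(2,3) by (auto simp: Osc_def)
  then show ?thesis by (metis abs_ge_zero abs_le_square_iff abs_of_nonneg order_trans power2_abs)
qed

lemma weighted_poincare:
  fixes \<rho> :: "'a::euclidean_space \<Rightarrow> real"
  assumes \<rho>c: "continuous_on UNIV \<rho>" and \<rho>pos: "\<And>x. \<rho> x > 0" and R1: "R1 > 0"
  obtains P where "P \<ge> 0" and "\<And>f G. (\<And>x. (f has_derivative (\<lambda>v. G x \<bullet> v)) (at x)) \<Longrightarrow> continuous_on UNIV G \<Longrightarrow>
      integrable lborel (\<lambda>x. \<rho> x * (norm (G x))\<^sup>2) \<Longrightarrow>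
      (\<integral>x. \<rho> x * (indicator (cball 0 R1) x * (f x - (\<integral>y. indicator (cball 0 R1) y * f y \<partial>lborel) / measure lborel (cball (0::'a) R1))\<^sup>2) \<partial>lborel)
        \<le> P * (\<integral>x. \<rho> x * (norm (G x))\<^sup>2 \<partial>lborel)"
proof -
  define B where "B = cball (0::'a) R1"
  have cB: "compact B" "B \<noteq> {}" unfolding B_def using R1 by auto
  obtain xa where xa: "xa \<in> B" "\<And>y. y \<in> B \<Longrightarrow> \<rho> y \<le> \<rho> xa"
    using continuous_attains_sup[OF cB continuous_on_subset[OF \<rho>c]] by auto
  obtain xi where xi: "xi \<in> B" "\<And>y. y \<in> B \<Longrightarrow> \<rho> xi \<le> \<rho> y"
    using continuous_attains_inf[OF cB continuous_on_subset[OF \<rho>c]] by auto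
  define rmax where "rmax = \<rho> xa"
  define rmin where "rmin = \<rho> xi"
  have rmin: "rmin > 0" unfolding rmin_def using \<rho>pos by auto
  define P0 where "P0 = 4 * R1\<^sup>2 * 2 ^ DIM('a)"
  have P0: "P0 \<ge> 0" unfolding P0_def by simp
  define P where "P = rmax * P0 / rmin"
  have "P \<ge> 0" unfolding P_def using rmin \<rho>pos[of xa] P0 by (simp add: rmax_def)
  moreover have "(\<integral>x. \<rho> x * (indicator B x * (f x - (\<integral>y. indicator B y * f y \<partial>lborel) / measure lborel B)\<^sup>2) \<partial>lborel)
        \<le> P * (\<integral>x. \<rho> x * (norm (G x))\<^sup>2 \<partial>lborel)"
    if fd: "\<And>x. (f has_derivative (\<lambda>v. G x \<bullet> v)) (at x)" and Gc: "continuous_on UNIV G"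
      and iG: "integrable lborel (\<lambda>x. \<rho> x * (norm (G x))\<^sup>2)" for f G
  proof -
    define c where "c = (\<integral>y. indicator B y * f y \<partial>lborel) / measure lborel B"
    have fc: "continuous_on UNIV f"
      using fd by (meson continuous_at_imp_continuous_on has_derivative_continuous)
    have intB: "integrable lborel (\<lambda>x. indicator B x * g x)" if "continuous_on UNIV g" for g :: "'a \<Rightarrow> real"
      using borel_integrable_compact[of B g] that cB by (auto intro: continuous_on_subset)
    have i1: "integrable lborel (\<lambda>x. \<rho> x * (indicator B x * (f x - c)\<^sup>2))"
    proof -
      have "integrable lborel (\<lambda>x. indicator B x * (\<rho> x * (f x - c)\<^sup>2))"
        by (rule intB, intro continuous_intros fc \<rho>c)
      then show ?thesis by (simp add: algebra_simps)
    qed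
    have i2: "integrable lborel (\<lambda>x. rmax * (indicator B x * (f x - c)\<^sup>2))"
      by (intro integrable_mult_right intB continuous_intros fc)
    have i3: "integrable lborel (\<lambda>x. indicator B x * (norm (G x))\<^sup>2)"
      by (intro intB continuous_intros Gc)
    have "(\<integral>x. \<rho> x * (indicator B x * (f x - c)\<^sup>2) \<partial>lborel) \<le> (\<integral>x. rmax * (indicator B x * (f x - c)\<^sup>2) \<partial>lborel)"
      by (rule integral_mono[OF i1 i2]) (auto simp: indicator_def rmax_def xa intro: mult_right_mono)
    also have "\<dots> = rmax * (\<integral>x. indicator B x * (f x - c)\<^sup>2 \<partial>lborel)" by simp
    also have "\<dots> \<le> rmax * (P0 * (\<integral>x. indicator B x * (norm (G x))\<^sup>2 \<partial>lborel))"
      using poincare_cball[OF fd Gc R1] unfolding P0_def B_def c_def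
      by (intro mult_left_mono) (auto simp: rmax_def less_imp_le[OF \<rho>pos])
    also have "(\<integral>x. indicator B x * (norm (G x))\<^sup>2 \<partial>lborel) \<le> (\<integral>x. (1 / rmin) * (\<rho> x * (norm (G x))\<^sup>2) \<partial>lborel)"
    proof (rule integral_mono[OF i3])
      show "integrable lborel (\<lambda>x. 1 / rmin * (\<rho> x * (norm (G x))\<^sup>2))" using iG by simp
      fix x
      show "indicator B x * (norm (G x))\<^sup>2 \<le> 1 / rmin * (\<rho> x * (norm (G x))\<^sup>2)"
      proof (cases "x \<in> B")
        case True
        then have "rmin \<le> \<rho> x" using xi rmin_def by auto
        then have "1 \<le> \<rho> x / rmin" using rmin by simp
        then have "1 * (norm (G x))\<^sup>2 \<le> \<rho> x / rmin * (norm (G x))\<^sup>2" by (intro mult_right_mono) auto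
        then show ?thesis using True by simp
      next
        case False
        then show ?thesis using rmin \<rho>pos[of x] by simp
      qed
    qed
    finally have "(\<integral>x. \<rho> x * (indicator B x * (f x - c)\<^sup>2) \<partial>lborel) \<le> rmax * (P0 * (1 / rmin * (\<integral>x. \<rho> x * (norm (G x))\<^sup>2 \<partial>lborel)))"
      using P0 \<rho>pos[of xa] by (simp add: rmax_def mult_left_mono)
    then show ?thesis unfolding c_def P_def by simp
  qed
  ultimately show ?thesis using that unfolding B_def by blast
qed


lemma pw_ineq:
  fixes e kk \<Psi> \<phi> b m r O2 iB iR iA :: real
  assumes e: "0 \<le> e" "e \<le> O2" and chi: "0 \<le> kk" "kk \<le> 1"
    and Psi: "\<Psi> \<ge> \<phi> - b * iR" and iR: "0 \<le> iR" "iR \<le> iB" and b: "b \<ge> 0" and m: "m \<ge> 0"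
    and phi: "\<phi> \<ge> -m" and neg: "\<phi> < 0 \<Longrightarrow> iB = 1" and iB: "iB = 0 \<or> iB = 1" and r: "r > 0"
    and iA: "iA = (if \<phi> \<le> 1 / r then 1 else 0)"
  shows "e \<le> r * (kk\<^sup>2 * e * \<Psi>) + r * ((b + m) * (iB * e)) + (1 - kk\<^sup>2) * e + O2 * iA"
proof -
  have c2: "0 \<le> kk\<^sup>2" "kk\<^sup>2 \<le> 1" using chi by (auto simp: power_le_one)
  have ce: "0 \<le> kk\<^sup>2 * e" using c2 e by simp
  have t1: "kk\<^sup>2 * e * \<Psi> \<ge> kk\<^sup>2 * e * (\<phi> - b * iB)"
  proof -
    have "\<phi> - b * iB \<le> \<phi> - b * iR" using b iR by (simp add: mult_left_mono)
    then have "\<phi> - b * iB \<le> \<Psi>" using Psi by linarith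
    then show ?thesis using ce by (simp add: mult_left_mono)
  qed
  have t2: "(b + m) * (iB * e) \<ge> kk\<^sup>2 * e * ((b + m) * iB)"
  proof -
    have "0 \<le> (b + m) * iB * e" using b m iB e by auto
    then have "kk\<^sup>2 * ((b + m) * iB * e) \<le> 1 * ((b + m) * iB * e)" using c2 by (intro mult_right_mono) auto
    then show ?thesis by (simp add: algebra_simps)
  qed
  have t3: "\<phi> + m * iB \<ge> max \<phi> 0" using neg phi m iB by (cases "\<phi> < 0") auto
  have T: "kk\<^sup>2 * e * \<Psi> + (b + m) * (iB * e) \<ge> kk\<^sup>2 * e * max \<phi> 0"
  proof -
    have "kk\<^sup>2 * e * (\<phi> - b * iB) + kk\<^sup>2 * e * ((b + m) * iB) = kk\<^sup>2 * e * (\<phi> + m * iB)"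
      by (simp add: algebra_simps)
    also have "\<dots> \<ge> kk\<^sup>2 * e * max \<phi> 0" using t3 ce by (simp add: mult_left_mono)
    finally show ?thesis using t1 t2 by linarith
  qed
  have Tnn: "0 \<le> kk\<^sup>2 * e * max \<phi> 0" using ce by simp
  have rT: "r * (kk\<^sup>2 * e * \<Psi>) + r * ((b + m) * (iB * e)) \<ge> r * (kk\<^sup>2 * e * max \<phi> 0)"
    using T r by (simp add: distrib_left[symmetric] mult_left_mono)
  have rest: "0 \<le> (1 - kk\<^sup>2) * e" using c2 e by simp
  show ?thesis
  proof (cases "\<phi> \<le> 1 / r")
    case True
    then have "iA = 1" using iA by simp
    moreover have "0 \<le> r * (kk\<^sup>2 * e * max \<phi> 0)" using r Tnn by simp
    ultimately have "O2 * iA = O2" "0 \<le> r * (kk\<^sup>2 * e * max \<phi> 0)" by auto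
    then show ?thesis using rT rest e by linarith
  next
    case False
    then have "iA = 0" using iA by simp
    have "r * \<phi> \<ge> 1" using False r by (simp add: field_simps)
    then have "kk\<^sup>2 * e * 1 \<le> kk\<^sup>2 * e * (r * \<phi>)" using ce by (intro mult_left_mono)
    moreover have "max \<phi> 0 = \<phi>"
    proof -
      have "\<phi> > 0"
      proof (rule ccontr)
        assume "\<not> \<phi> > 0"
        then have "r * \<phi> \<le> 0" using r by (simp add: mult_nonneg_nonpos)
        then show False using \<open>r * \<phi> \<ge> 1\<close> by simp
      qed
      then show ?thesis by simp
    qed
    ultimately have "kk\<^sup>2 * e \<le> r * (kk\<^sup>2 * e * max \<phi> 0)" by (simp add: algebra_simps)
    then show ?thesis using rT \<open>iA = 0\<close> by (simp add: algebra_simps)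
  qed
qed


lemma sq_sum_le: fixes a b :: real shows "(a + b)\<^sup>2 \<le> 2 * a\<^sup>2 + 2 * b\<^sup>2"
proof -
  have "0 \<le> (a - b)\<^sup>2" by simp
  then show ?thesis by (simp add: power2_eq_square algebra_simps)
qed

lemma main_estimate:
  fixes W U F \<phi>U :: "'a::euclidean_space \<Rightarrow> real" and b R R1 m :: real
  assumes W: "Ck 1 W" and U: "Ck 1 U" and F: "Ck 2 F" and Fpos: "\<And>x. F x > 0"
    and \<rho>int: "integrable lborel (\<lambda>x. exp (- U x) * exp (- W x))"
    and \<rho>1: "(\<integral>x. exp (- U x) * exp (- W x) \<partial>lborel) = 1"
    and Psi: "\<And>x. \<phi>U x - b * indicator (ball 0 R) x \<le> - (LW W F x - grad U x \<bullet> grad F x) / F x"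
    and \<phi>Uc: "continuous_on UNIV \<phi>U"
    and mlow: "\<And>x. \<phi>U x \<ge> -m" and m: "m \<ge> 0"
    and neg: "\<And>x. \<phi>U x < 0 \<Longrightarrow> norm x \<le> R1" and RR1: "R \<le> R1" and R1: "R1 > 0" and b: "b \<ge> 0"
  shows "\<exists>K>0. \<forall>f r. Ck 1 f \<longrightarrow> bounded (range f) \<longrightarrow>
      integrable lborel (\<lambda>x. exp (- U x) * exp (- W x) * (norm (grad f x))\<^sup>2) \<longrightarrow> r > 0 \<longrightarrow>
      (\<exists>c. (\<integral>x. exp (- U x) * exp (- W x) * (f x - c)\<^sup>2 \<partial>lborel)
        \<le> r * K * (\<integral>x. exp (- U x) * exp (- W x) * (norm (grad f x))\<^sup>2 \<partial>lborel)
          + (\<integral>x. exp (- U x) * exp (- W x) * indicator {x. \<phi>U x \<le> 1 / r} x \<partial>lborel) * (Osc f)\<^sup>2)"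
proof -
  define \<rho> where "\<rho> x = exp (- U x) * exp (- W x)" for x
  have F1: "Ck 1 F" and Fi: "\<And>i. i \<in> Basis \<Longrightarrow> Ck 1 (pd F i)" using Ck2_D[OF F] by auto
  note Ud = Ck1_D[OF U] and Wd = Ck1_D[OF W] and Fd = Ck1_D[OF F1]
  have Fne: "\<And>x. F x \<noteq> 0" using Fpos by (metis less_irrefl)
  have \<rho>c: "continuous_on UNIV \<rho>" unfolding \<rho>_def[abs_def] using Ud(2) Wd(2) by (intro continuous_intros)
  have \<rho>pos: "\<And>x. \<rho> x > 0" by (simp add: \<rho>_def)
  have \<rho>m[measurable]: "\<rho> \<in> borel_measurable borel" using \<rho>c by (rule borel_measurable_continuous_onI)
  have \<rho>i: "integrable lborel \<rho>" using \<rho>int unfolding \<rho>_def[abs_def] .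
  have \<rho>I: "(\<integral>x. \<rho> x \<partial>lborel) = 1" using \<rho>1 unfolding \<rho>_def[abs_def] .
  have bnd_int: "integrable lborel (\<lambda>x. \<rho> x * h x)" if hm: "h \<in> borel_measurable borel" and hb: "\<And>x. \<bar>h x\<bar> \<le> M" for h M
  proof (rule Bochner_Integration.integrable_bound[where f="\<lambda>x. M * \<rho> x"])
    show "integrable lborel (\<lambda>x. M * \<rho> x)" using \<rho>i by simp
    show "(\<lambda>x. \<rho> x * h x) \<in> borel_measurable lborel" using hm by simp
    show "AE x in lborel. norm (\<rho> x * h x) \<le> norm (M * \<rho> x)"
    proof (rule AE_I2)
      fix x
      have "\<bar>\<rho> x * h x\<bar> = \<rho> x * \<bar>h x\<bar>" using \<rho>pos[of x] by (simp add: abs_mult)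
      also have "\<dots> \<le> \<rho> x * M" using hb[of x] \<rho>pos[of x] by (intro mult_left_mono) auto
      also have "\<dots> \<le> \<bar>M * \<rho> x\<bar>" by (simp add: mult.commute)
      finally show "norm (\<rho> x * h x) \<le> norm (M * \<rho> x)" by simp
    qed
  qed
  define \<Psi> where "\<Psi> x = - (LW W F x - grad U x \<bullet> grad F x) / F x" for x
  have \<Psi>c: "continuous_on UNIV \<Psi>"
  proof -
    have "continuous_on UNIV (lap F)"
      unfolding lap_def[abs_def] using Ck1_D(3)[OF Fi] by (intro continuous_intros) auto
    then show ?thesis unfolding \<Psi>_def[abs_def] LW_def using Fd(2) Fd(4) Ud(4) Wd(4) Fne
      by (intro continuous_intros) auto
  qed
  obtain P where P: "P \<ge> 0" and WP: "\<And>f G. (\<And>x. (f has_derivative (\<lambda>v. G x \<bullet> v)) (at x)) \<Longrightarrow> continuous_on UNIV G \<Longrightarrow>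
      integrable lborel (\<lambda>x. \<rho> x * (norm (G x))\<^sup>2) \<Longrightarrow>
      (\<integral>x. \<rho> x * (indicator (cball 0 R1) x * (f x - (\<integral>y. indicator (cball 0 R1) y * f y \<partial>lborel) / measure lborel (cball (0::'a) R1))\<^sup>2) \<partial>lborel)
        \<le> P * (\<integral>x. \<rho> x * (norm (G x))\<^sup>2 \<partial>lborel)"
    using weighted_poincare[OF \<rho>c \<rho>pos R1] by blast
  define K where "K = 2 + (b + m) * P"
  have "K > 0" unfolding K_def using b m P by (simp add: add_pos_nonneg)
  moreover have "\<exists>c. (\<integral>x. \<rho> x * (f x - c)\<^sup>2 \<partial>lborel)
        \<le> r * K * (\<integral>x. \<rho> x * (norm (grad f x))\<^sup>2 \<partial>lborel)
          + (\<integral>x. \<rho> x * indicator {x. \<phi>U x \<le> 1 / r} x \<partial>lborel) * (Osc f)\<^sup>2"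
    if f1: "Ck 1 f" and fb: "bounded (range f)" and iG: "integrable lborel (\<lambda>x. \<rho> x * (norm (grad f x))\<^sup>2)"
      and r: "r > 0" for f r
  proof -
    define B where "B = cball (0::'a) R1"
    define G where "G = grad f"
    note fD = Ck1_D[OF f1]
    have fd: "\<And>x. (f has_derivative (\<lambda>v. G x \<bullet> v)) (at x)" using fD(1) unfolding G_def .
    have Gc: "continuous_on UNIV G" using fD(4) unfolding G_def .
    have fc: "continuous_on UNIV f" using fD(2) .
    have fm[measurable]: "f \<in> borel_measurable borel" using fc by (rule borel_measurable_continuous_onI)
    have Gm[measurable]: "G \<in> borel_measurable borel" using Gc by (rule borel_measurable_continuous_onI)
    have \<phi>Um[measurable]: "\<phi>U \<in> borel_measurable borel" using \<phi>Uc by (rule borel_measurable_continuous_onI)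
    have Bm[measurable]: "B \<in> sets borel" unfolding B_def by simp
    define c where "c = (\<integral>y. indicator B y * f y \<partial>lborel) / measure lborel B"
    define Os where "Os = Osc f"
    have mBpos: "measure lborel B > 0" unfolding B_def using R1 by simp
    have cB: "compact B" unfolding B_def by simp
    have intBf: "integrable lborel (\<lambda>x. indicator B x * h x)" if "continuous_on UNIV h" for h :: "'a \<Rightarrow> real"
      using borel_integrable_compact[OF cB, of h] that by (auto intro: continuous_on_subset)
    have iBc: "integrable lborel (\<lambda>x. indicator B x * k)" for k :: real using intBf[of "\<lambda>_. k"] by simp
    have cle: "c \<le> Sup (range f)"
    proof -
      have "(\<integral>y. indicator B y * f y \<partial>lborel) \<le> (\<integral>y. indicator B y * Sup (range f) \<partial>lborel)"
        by (rule integral_mono[OF intBf[OF fc] iBc]) (auto simp: indicator_def osc_bounds[OF fb])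
      also have "\<dots> = Sup (range f) * measure lborel B" by simp
      finally show ?thesis unfolding c_def using mBpos by (simp add: field_simps)
    qed
    have cge: "Inf (range f) \<le> c"
    proof -
      have "(\<integral>y. indicator B y * Inf (range f) \<partial>lborel) \<le> (\<integral>y. indicator B y * f y \<partial>lborel)"
        by (rule integral_mono[OF iBc intBf[OF fc]]) (auto simp: indicator_def osc_bounds[OF fb])
      also have "(\<integral>y. indicator B y * Inf (range f) \<partial>lborel) = Inf (range f) * measure lborel B" by simp
      finally show ?thesis unfolding c_def using mBpos by (simp add: field_simps)
    qed
    have eb: "\<And>x. (f x - c)\<^sup>2 \<le> Os\<^sup>2" unfolding Os_def using osc_sq[OF fb cge cle] .
    have fcabs: "\<bar>f x - c\<bar> \<le> Os" for x
      using osc_bounds[OF fb, of x] cge cle by (auto simp: Os_def Osc_def)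
    have Os0: "Os \<ge> 0" using fcabs[of 0] by simp
    define E where "E = (\<integral>x. \<rho> x * (norm (G x))\<^sup>2 \<partial>lborel)"
    have iG': "integrable lborel (\<lambda>x. \<rho> x * (norm (G x))\<^sup>2)" using iG unfolding G_def .
    have E0: "E \<ge> 0" unfolding E_def using \<rho>pos by (intro integral_nonneg_AE AE_I2) (simp add: less_imp_le)
    have WPf: "(\<integral>x. \<rho> x * (indicator B x * (f x - c)\<^sup>2) \<partial>lborel) \<le> P * E"
      using WP[OF fd Gc iG'] unfolding B_def c_def E_def .
    define Ac where "Ac = {x. \<phi>U x \<le> 1 / r}"
    have Acm[measurable]: "Ac \<in> sets borel" unfolding Ac_def by measurable
    define mu where "mu = (\<integral>x. \<rho> x * indicator Ac x \<partial>lborel)"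
    define \<delta> where "\<delta> n = (\<integral>x. \<rho> x * ((1 - (chi (real n + 1) x)\<^sup>2) * (f x - c)\<^sup>2) \<partial>lborel)" for n
    have chim[measurable]: "chi N \<in> borel_measurable borel" for N :: real
      using chi_cont by (rule borel_measurable_continuous_onI)
    have i_main: "integrable lborel (\<lambda>x. \<rho> x * (f x - c)\<^sup>2)"
      by (rule bnd_int[where M="Os\<^sup>2"]) (use eb in auto)
    have step: "(\<integral>x. \<rho> x * (f x - c)\<^sup>2 \<partial>lborel) \<le> r * K * E + mu * Os\<^sup>2 + (32 * r * Os\<^sup>2 / (real n + 1)\<^sup>2 + \<delta> n)" for n
    proof -
      define N where "N = real n + 1"
      have N: "N > 0" unfolding N_def by simp
      define g where "g x = (f x - c) * chi N x" for x
      define Gg where "Gg x = chi N x *\<^sub>R G x + (f x - c) *\<^sub>R gchi N x" for x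
      have gd: "(g has_derivative (\<lambda>v. Gg x \<bullet> v)) (at x)" for x
      proof -
        have "((\<lambda>x. (f x - c) * chi N x) has_derivative (\<lambda>h. (f x - c) * (gchi N x \<bullet> h) + (G x \<bullet> h - 0) * chi N x)) (at x)"
          by (intro has_derivative_mult has_derivative_diff fd chi_deriv has_derivative_const)
        moreover have "(\<lambda>h. (f x - c) * (gchi N x \<bullet> h) + (G x \<bullet> h - 0) * chi N x) = (\<lambda>v. Gg x \<bullet> v)"
          by (auto simp: fun_eq_iff Gg_def inner_add_left algebra_simps)
        ultimately show ?thesis unfolding g_def[abs_def] by simp
      qed
      have Ggc: "continuous_on UNIV Gg" unfolding Gg_def[abs_def]
        using chi_cont Gc fc gchi_cont by (intro continuous_intros)
      have gc: "continuous_on UNIV g" unfolding g_def[abs_def] using chi_cont fc by (intro continuous_intros)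
      have gs: "g x = 0" if "norm x \<ge> N" for x using chi_zero[OF N that] by (simp add: g_def)
      have Ggz: "Gg x = 0" if "norm x > N" for x using deriv_zero_outside[OF gd gs that] .
      have ibp: "(\<integral>x. \<rho> x * (g x ^ 2 * \<Psi> x) \<partial>lborel) \<le> (\<integral>x. \<rho> x * (norm (Gg x))\<^sup>2 \<partial>lborel)"
        using ibp_lyap[OF W U F Fpos gd Ggc gs] unfolding \<rho>_def \<Psi>_def by simp
      have Ggb: "(norm (Gg x))\<^sup>2 \<le> 2 * (norm (G x))\<^sup>2 + 2 * (Os * (4 / N))\<^sup>2" for x
      proof -
        have a: "norm (chi N x *\<^sub>R G x) \<le> norm (G x)"
          using chi_bounds[of N x] by (simp add: mult_left_le_one_le)
        have b': "norm ((f x - c) *\<^sub>R gchi N x) \<le> Os * (4 / N)"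
          using fcabs[of x] gchi_norm[OF N, of x] Os0 using mult_mono[of "\<bar>f x - c\<bar>" Os "norm (gchi N x)" "4 / N"] by simp
        have "norm (Gg x) \<le> norm (G x) + Os * (4 / N)"
          unfolding Gg_def using a b' norm_triangle_ineq[of "chi N x *\<^sub>R G x" "(f x - c) *\<^sub>R gchi N x"] by linarith
        then have "(norm (Gg x))\<^sup>2 \<le> (norm (G x) + Os * (4 / N))\<^sup>2" by (intro power_mono) auto
        also have "\<dots> \<le> 2 * (norm (G x))\<^sup>2 + 2 * (Os * (4 / N))\<^sup>2"
          by (rule sq_sum_le)
        finally show ?thesis .
      qed
      have iGg: "integrable lborel (\<lambda>x. \<rho> x * (norm (Gg x))\<^sup>2)"
        by (rule integrable_cont_supp[of _ N]) (use Ggz \<rho>c Ggc in \<open>auto intro!: continuous_intros\<close>)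
      have intGg: "(\<integral>x. \<rho> x * (norm (Gg x))\<^sup>2 \<partial>lborel) \<le> 2 * E + 32 * Os\<^sup>2 / N\<^sup>2"
      proof -
        have "(\<integral>x. \<rho> x * (norm (Gg x))\<^sup>2 \<partial>lborel) \<le> (\<integral>x. 2 * (\<rho> x * (norm (G x))\<^sup>2) + (2 * (Os * (4 / N))\<^sup>2) * \<rho> x \<partial>lborel)"
        proof (rule integral_mono[OF iGg])
          show "integrable lborel (\<lambda>x. 2 * (\<rho> x * (norm (G x))\<^sup>2) + (2 * (Os * (4 / N))\<^sup>2) * \<rho> x)"
            using iG' \<rho>i by simp
          fix x :: 'a
          have "\<rho> x * (norm (Gg x))\<^sup>2 \<le> \<rho> x * (2 * (norm (G x))\<^sup>2 + 2 * (Os * (4 / N))\<^sup>2)"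
            using Ggb[of x] \<rho>pos[of x] by (intro mult_left_mono) auto
          then show "\<rho> x * (norm (Gg x))\<^sup>2 \<le> 2 * (\<rho> x * (norm (G x))\<^sup>2) + (2 * (Os * (4 / N))\<^sup>2) * \<rho> x"
            by (simp add: algebra_simps)
        qed
        also have "\<dots> = 2 * E + 2 * (Os * (4 / N))\<^sup>2" using iG' \<rho>i \<rho>I by (simp add: E_def)
        also have "\<dots> = 2 * E + 32 * Os\<^sup>2 / N\<^sup>2" by (simp add: power_mult_distrib power_divide)
        finally show ?thesis .
      qed
      have i_a: "integrable lborel (\<lambda>x. \<rho> x * (g x ^ 2 * \<Psi> x))"
        by (rule integrable_cont_supp[of _ N]) (use gs \<rho>c gc \<Psi>c in \<open>auto intro!: continuous_intros\<close>)
      have i_b: "integrable lborel (\<lambda>x. \<rho> x * (indicator B x * (f x - c)\<^sup>2))"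
        by (rule bnd_int[where M="Os\<^sup>2"]) (use eb in \<open>auto simp: indicator_def\<close>)
      have i_c: "integrable lborel (\<lambda>x. \<rho> x * ((1 - (chi N x)\<^sup>2) * (f x - c)\<^sup>2))"
      proof (rule bnd_int[where M="Os\<^sup>2"])
        show "(\<lambda>x. (1 - (chi N x)\<^sup>2) * (f x - c)\<^sup>2) \<in> borel_measurable borel" by measurable
        fix x :: 'a
        have h: "0 \<le> 1 - (chi N x)\<^sup>2" "1 - (chi N x)\<^sup>2 \<le> 1" using chi_bounds[of N x] by (auto simp: power_le_one)
        then have "(1 - (chi N x)\<^sup>2) * (f x - c)\<^sup>2 \<le> Os\<^sup>2"
          using eb[of x] by (meson mult_left_le_one_le order_trans zero_le_power2)
        moreover have "0 \<le> (1 - (chi N x)\<^sup>2) * (f x - c)\<^sup>2" using h by simp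
        ultimately show "\<bar>(1 - (chi N x)\<^sup>2) * (f x - c)\<^sup>2\<bar> \<le> Os\<^sup>2" by simp
      qed
      have i_d: "integrable lborel (\<lambda>x. \<rho> x * indicator Ac x)"
        by (rule bnd_int[where M=1]) (auto simp: indicator_def)
      have pw: "\<rho> x * (f x - c)\<^sup>2 \<le> r * (\<rho> x * (g x ^ 2 * \<Psi> x)) + (r * (b + m)) * (\<rho> x * (indicator B x * (f x - c)\<^sup>2))
          + \<rho> x * ((1 - (chi N x)\<^sup>2) * (f x - c)\<^sup>2) + Os\<^sup>2 * (\<rho> x * indicator Ac x)" for x
      proof -
        have iRB: "indicator (ball 0 R) x \<le> (indicator B x :: real)"
          using RR1 by (auto simp: indicator_def B_def)
        have "(f x - c)\<^sup>2 \<le> r * ((chi N x)\<^sup>2 * (f x - c)\<^sup>2 * \<Psi> x) + r * ((b + m) * (indicator B x * (f x - c)\<^sup>2))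
            + (1 - (chi N x)\<^sup>2) * (f x - c)\<^sup>2 + Os\<^sup>2 * indicator Ac x"
        proof (rule pw_ineq)
          show "\<Psi> x \<ge> \<phi>U x - b * indicator (ball 0 R) x" using Psi[of x] unfolding \<Psi>_def .
          show "\<phi>U x < 0 \<Longrightarrow> indicator B x = (1::real)" using neg[of x] by (auto simp: B_def)
          show "indicator Ac x = (if \<phi>U x \<le> 1 / r then 1 else (0::real))" by (simp add: Ac_def indicator_def)
          show "0 \<le> (f x - c)\<^sup>2" by simp
          show "(f x - c)\<^sup>2 \<le> Os\<^sup>2" by (rule eb)
          show "0 \<le> chi N x" "chi N x \<le> 1" by (rule chi_bounds)+
          show "0 \<le> (indicator (ball 0 R) x :: real)" by simp
          show "indicator (ball 0 R) x \<le> (indicator B x :: real)" by (rule iRB)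
          show "b \<ge> 0" "m \<ge> 0" "r > 0" by (rule b, rule m, rule r)
          show "\<phi>U x \<ge> -m" by (rule mlow)
          show "indicator B x = (0::real) \<or> indicator B x = 1" by (simp add: indicator_def)
        qed
        then have "\<rho> x * (f x - c)\<^sup>2 \<le> \<rho> x * (r * ((chi N x)\<^sup>2 * (f x - c)\<^sup>2 * \<Psi> x) + r * ((b + m) * (indicator B x * (f x - c)\<^sup>2))
            + (1 - (chi N x)\<^sup>2) * (f x - c)\<^sup>2 + Os\<^sup>2 * indicator Ac x)"
          using \<rho>pos[of x] by (intro mult_left_mono) auto
        moreover have gsq: "g x ^ 2 = (chi N x)\<^sup>2 * (f x - c)\<^sup>2" by (simp add: g_def power_mult_distrib)
        ultimately show ?thesis unfolding gsq by (simp add: algebra_simps)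
      qed
      have "(\<integral>x. \<rho> x * (f x - c)\<^sup>2 \<partial>lborel) \<le> (\<integral>x. r * (\<rho> x * (g x ^ 2 * \<Psi> x)) + (r * (b + m)) * (\<rho> x * (indicator B x * (f x - c)\<^sup>2))
          + \<rho> x * ((1 - (chi N x)\<^sup>2) * (f x - c)\<^sup>2) + Os\<^sup>2 * (\<rho> x * indicator Ac x) \<partial>lborel)"
        by (rule integral_mono[OF i_main _ pw]) (use i_a i_b i_c i_d in simp)
      also have "\<dots> = r * (\<integral>x. \<rho> x * (g x ^ 2 * \<Psi> x) \<partial>lborel) + (r * (b + m)) * (\<integral>x. \<rho> x * (indicator B x * (f x - c)\<^sup>2) \<partial>lborel)
          + (\<integral>x. \<rho> x * ((1 - (chi N x)\<^sup>2) * (f x - c)\<^sup>2) \<partial>lborel) + Os\<^sup>2 * mu"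
        using i_a i_b i_c i_d by (simp add: mu_def)
      also have "\<dots> \<le> r * (2 * E + 32 * Os\<^sup>2 / N\<^sup>2) + (r * (b + m)) * (P * E)
          + (\<integral>x. \<rho> x * ((1 - (chi N x)\<^sup>2) * (f x - c)\<^sup>2) \<partial>lborel) + Os\<^sup>2 * mu"
      proof -
        have "r * (\<integral>x. \<rho> x * (g x ^ 2 * \<Psi> x) \<partial>lborel) \<le> r * (2 * E + 32 * Os\<^sup>2 / N\<^sup>2)"
          using ibp intGg r by (intro mult_left_mono) auto
        moreover have "(r * (b + m)) * (\<integral>x. \<rho> x * (indicator B x * (f x - c)\<^sup>2) \<partial>lborel) \<le> (r * (b + m)) * (P * E)"
          using WPf r b m by (intro mult_left_mono) auto
        ultimately show ?thesis by linarith
      qed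
      also have "\<dots> = r * K * E + mu * Os\<^sup>2 + (32 * r * Os\<^sup>2 / (real n + 1)\<^sup>2 + \<delta> n)"
        unfolding K_def \<delta>_def N_def by (simp add: algebra_simps)
      finally show ?thesis .
    qed
    have lim\<delta>: "\<delta> \<longlonglongrightarrow> 0"
    proof -
      have "(\<lambda>n. \<delta> n) \<longlonglongrightarrow> (\<integral>x. (0::real) \<partial>(lborel :: 'a measure))"
        unfolding \<delta>_def
      proof (rule integral_dominated_convergence[where w="\<lambda>x. \<rho> x * Os\<^sup>2"])
        show "(\<lambda>x. 0::real) \<in> borel_measurable (lborel :: 'a measure)" by simp
        show "(\<lambda>x. \<rho> x * ((1 - (chi (real n + 1) x)\<^sup>2) * (f x - c)\<^sup>2)) \<in> borel_measurable lborel" for n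
          by measurable
        show "integrable lborel (\<lambda>x. \<rho> x * Os\<^sup>2)" using \<rho>i by simp
        show "AE x in lborel. (\<lambda>n. \<rho> x * ((1 - (chi (real n + 1) x)\<^sup>2) * (f x - c)\<^sup>2)) \<longlonglongrightarrow> 0"
        proof (rule AE_I2)
          fix x :: 'a
          have "(\<lambda>n. \<rho> x * ((1 - (chi (real n + 1) x)\<^sup>2) * (f x - c)\<^sup>2)) \<longlonglongrightarrow> \<rho> x * ((1 - 1\<^sup>2) * (f x - c)\<^sup>2)"
            by (intro tendsto_intros chi_lim)
          then show "(\<lambda>n. \<rho> x * ((1 - (chi (real n + 1) x)\<^sup>2) * (f x - c)\<^sup>2)) \<longlonglongrightarrow> 0" by simp
        qed
        show "AE x in lborel. norm (\<rho> x * ((1 - (chi (real n + 1) x)\<^sup>2) * (f x - c)\<^sup>2)) \<le> \<rho> x * Os\<^sup>2" for n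
        proof (rule AE_I2)
          fix x :: 'a
          have "0 \<le> 1 - (chi (real n + 1) x)\<^sup>2" "1 - (chi (real n + 1) x)\<^sup>2 \<le> 1" using chi_bounds[of "real n + 1" x] by (auto simp: power_le_one)
          then have "(1 - (chi (real n + 1) x)\<^sup>2) * (f x - c)\<^sup>2 \<le> Os\<^sup>2"
            using eb[of x] by (meson mult_left_le_one_le order_trans zero_le_power2)
          moreover have "0 \<le> (1 - (chi (real n + 1) x)\<^sup>2) * (f x - c)\<^sup>2" using \<open>0 \<le> 1 - _\<close> by simp
          ultimately show "norm (\<rho> x * ((1 - (chi (real n + 1) x)\<^sup>2) * (f x - c)\<^sup>2)) \<le> \<rho> x * Os\<^sup>2"
            using \<rho>pos[of x] by (simp add: abs_mult mult_left_mono)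
        qed
      qed
      then show ?thesis by simp
    qed
    have lim2: "(\<lambda>n. 32 * r * Os\<^sup>2 / (real n + 1)\<^sup>2) \<longlonglongrightarrow> 0"
    proof -
      have "(\<lambda>n. 32 * r * Os\<^sup>2 * (inverse (real (Suc n)))\<^sup>2) \<longlonglongrightarrow> 32 * r * Os\<^sup>2 * 0\<^sup>2"
        by (intro tendsto_intros LIMSEQ_inverse_real_of_nat)
      then show ?thesis by (simp add: power_inverse divide_inverse add.commute)
    qed
    have "(\<lambda>n. r * K * E + mu * Os\<^sup>2 + (32 * r * Os\<^sup>2 / (real n + 1)\<^sup>2 + \<delta> n)) \<longlonglongrightarrow> r * K * E + mu * Os\<^sup>2 + (0 + 0)"
      by (intro tendsto_intros lim2 lim\<delta>)
    then have "(\<integral>x. \<rho> x * (f x - c)\<^sup>2 \<partial>lborel) \<le> r * K * E + mu * Os\<^sup>2"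
      using step by (intro LIMSEQ_le_const) auto
    then show ?thesis unfolding E_def mu_def Os_def Ac_def G_def by blast
  qed
  ultimately show ?thesis unfolding \<rho>_def by blast
qed


lemma cont_nn_integral_zero:
  fixes g :: "'a::euclidean_space \<Rightarrow> real"
  assumes gc: "continuous_on UNIV g" and gnn: "\<And>x. g x \<ge> 0" and z: "(\<integral>\<^sup>+x. ennreal (g x) \<partial>lborel) = 0"
  shows "g x = 0"
proof (rule ccontr)
  assume "g x \<noteq> 0"
  then have gx: "g x > 0" using gnn[of x] by simp
  obtain d where d: "d > 0" "\<And>y. dist y x < d \<Longrightarrow> dist (g y) (g x) < g x / 2"
    using gc gx unfolding continuous_on_iff by (metis UNIV_I half_gt_zero)
  have low: "ennreal (g x / 2) * indicator (cball x (d/2)) y \<le> ennreal (g y)" for y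
  proof (cases "y \<in> cball x (d/2)")
    case True
    then have "dist y x < d" using d by (simp add: dist_commute)
    then have "\<bar>g y - g x\<bar> < g x / 2" using d(2)[of y] by (simp add: dist_real_def)
    then have "g y \<ge> g x / 2" by linarith
    then show ?thesis using True by (simp add: ennreal_leI)
  qed simp
  have gm: "g \<in> borel_measurable borel" using gc by (rule borel_measurable_continuous_onI)
  have "ennreal (g x / 2) * emeasure lborel (cball x (d/2)) = (\<integral>\<^sup>+y. ennreal (g x / 2) * indicator (cball x (d/2)) y \<partial>lborel)"
    by (simp add: nn_integral_cmult_indicator)
  also have "\<dots> \<le> (\<integral>\<^sup>+y. ennreal (g y) \<partial>lborel)" by (intro nn_integral_mono low)
  finally have le0: "ennreal (g x / 2) * emeasure lborel (cball x (d/2)) \<le> 0" using z by simp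
  have "emeasure lborel (cball x (d/2)) = ennreal (measure lborel (cball x (d/2)))"
    by (rule emeasure_eq_ennreal_measure) (use emeasure_compact_finite[of "cball x (d/2)"] in \<open>simp add: less_top\<close>)
  moreover have "measure lborel (cball x (d/2)) > 0" using d by simp
  ultimately have "ennreal (g x / 2) * emeasure lborel (cball x (d/2)) > 0"
    using gx by (simp add: ennreal_mult''[symmetric])
  then show False using le0 by (meson not_le)
qed

lemma var_le:
  fixes M :: "'a measure" and f :: "'a \<Rightarrow> real"
  assumes P: "prob_space M" and fm: "f \<in> borel_measurable M" and fb: "\<And>x. \<bar>f x\<bar> \<le> B"
  shows "Var M f \<le> (\<integral>x. (f x - c)\<^sup>2 \<partial>M)"
proof -
  interpret prob_space M by (rule P)
  have i1: "integrable M f" by (rule integrable_const_bound[where B=B]) (use fm fb in \<open>auto intro!: AE_I2 order_trans[OF fb abs_ge_self]\<close>)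
  have i2: "integrable M (\<lambda>x. (f x)\<^sup>2)"
  proof (rule integrable_const_bound[where B="B\<^sup>2"])
    show "(\<lambda>x. (f x)\<^sup>2) \<in> borel_measurable M" using fm by simp
    show "AE x in M. norm ((f x)\<^sup>2) \<le> B\<^sup>2"
    proof (rule AE_I2)
      fix x
      have "\<bar>f x\<bar>\<^sup>2 \<le> B\<^sup>2" using fb[of x] by (intro power_mono) auto
      then show "norm ((f x)\<^sup>2) \<le> B\<^sup>2" by simp
    qed
  qed
  define a where "a = (\<integral>y. f y \<partial>M)"
  have "(\<integral>x. (f x - c)\<^sup>2 \<partial>M) = (\<integral>x. (f x)\<^sup>2 - 2 * c * f x + c\<^sup>2 \<partial>M)"
    by (simp add: power2_eq_square algebra_simps)
  also have "\<dots> = (\<integral>x. (f x)\<^sup>2 \<partial>M) - 2 * c * a + c\<^sup>2" using i1 i2 by (simp add: a_def prob_space)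
  finally have ec: "(\<integral>x. (f x - c)\<^sup>2 \<partial>M) = (\<integral>x. (f x)\<^sup>2 \<partial>M) - 2 * c * a + c\<^sup>2" .
  have "Var M f = (\<integral>x. (f x - a)\<^sup>2 \<partial>M)" by (simp add: Var_def a_def)
  also have "\<dots> = (\<integral>x. (f x)\<^sup>2 \<partial>M) - 2 * a * a + a\<^sup>2"
  proof -
    have "(\<integral>x. (f x - a)\<^sup>2 \<partial>M) = (\<integral>x. (f x)\<^sup>2 - 2 * a * f x + a\<^sup>2 \<partial>M)"
      by (simp add: power2_eq_square algebra_simps)
    also have "\<dots> = (\<integral>x. (f x)\<^sup>2 \<partial>M) - 2 * a * a + a\<^sup>2" using i1 i2 by (simp add: a_def prob_space)
    finally show ?thesis .
  qed
  finally show ?thesis unfolding ec using zero_le_power2[of "a - c"]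
    by (simp add: power2_eq_square algebra_simps)
qed

lemma var_const:
  assumes P: "prob_space M" and "\<And>x. f x = k"
  shows "Var M f = 0"
proof -
  interpret prob_space M by (rule P)
  show ?thesis using assms(2) by (simp add: Var_def prob_space)
qed


lemma hU_ge_aux:
  fixes U W :: "'a::euclidean_space \<Rightarrow> real"
  assumes Um[measurable]: "U \<in> borel_measurable borel" and Wm[measurable]: "W \<in> borel_measurable borel"
    and A[measurable]: "A \<in> sets borel"
  shows "emeasure (density lborel (\<lambda>x. ennreal (exp (- U x) * exp (- W x)))) A
     \<le> (SUP x\<in>A. ennreal (exp (- U x))) * emeasure (density lborel (\<lambda>x. ennreal (exp (- W x)))) A"
proof -
  define S where "S = (SUP x\<in>A. ennreal (exp (- U x)))"
  have "emeasure (density lborel (\<lambda>x. ennreal (exp (- U x) * exp (- W x)))) A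
      = (\<integral>\<^sup>+x. ennreal (exp (- U x) * exp (- W x)) * indicator A x \<partial>lborel)"
    by (subst emeasure_density) auto
  also have "\<dots> \<le> (\<integral>\<^sup>+x. S * (ennreal (exp (- W x)) * indicator A x) \<partial>lborel)"
  proof (rule nn_integral_mono)
    fix x
    show "ennreal (exp (- U x) * exp (- W x)) * indicator A x \<le> S * (ennreal (exp (- W x)) * indicator A x)"
    proof (cases "x \<in> A")
      case True
      have "ennreal (exp (- U x)) \<le> S" unfolding S_def using True by (rule SUP_upper)
      then have "ennreal (exp (- U x)) * ennreal (exp (- W x)) \<le> S * ennreal (exp (- W x))"
        by (rule mult_right_mono) simp
      then show ?thesis using True by (simp add: ennreal_mult)
    qed simp
  qed
  also have "\<dots> = S * (\<integral>\<^sup>+x. ennreal (exp (- W x)) * indicator A x \<partial>lborel)"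
    by (rule nn_integral_cmult) measurable
  also have "(\<integral>\<^sup>+x. ennreal (exp (- W x)) * indicator A x \<partial>lborel) = emeasure (density lborel (\<lambda>x. ennreal (exp (- W x)))) A"
    by (subst emeasure_density) auto
  finally show ?thesis unfolding S_def .
qed


theorem theorem2p4:
  fixes W U F \<phi> :: "'a::euclidean_space \<Rightarrow> real" and b R :: real
  assumes W_C1: "Ck 1 W"
    and \<nu>_prob: "prob_space (density lborel (\<lambda>x. ennreal (exp (- W x))))"
    and b_pos: "b > 0" and R_pos: "R > 0"
    and \<phi>_cont: "continuous_on UNIV \<phi>" and \<phi>_pos: "\<forall>x. \<phi> x > 0"
    and F_C2: "Ck 2 F" and F_ge1: "\<forall>x. F x \<ge> 1"
    and Lyap: "\<forall>x. LW W F x / F x \<le> - \<phi> x + b * indicator (ball 0 R) x"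
    and U_smooth: "smooth U"
    and \<mu>_prob: "prob_space (density lborel (\<lambda>x. ennreal (exp (- U x) * exp (- W x))))"
    and \<phi>U_pos: "\<exists>R0. \<forall>x. norm x \<ge> R0 \<longrightarrow> \<phi> x + (grad U x \<bullet> grad F x) / F x > 0"
  shows "\<exists>C>0. weak_poincare (density lborel (\<lambda>x. ennreal (exp (- U x) * exp (- W x))))
            (\<lambda>s. ennreal C * gen_inv
                 (hU (density lborel (\<lambda>x. ennreal (exp (- W x)))) U
                     (\<lambda>x. \<phi> x + (grad U x \<bullet> grad F x) / F x)) s)"
proof -
  define \<rho> where "\<rho> x = exp (- U x) * exp (- W x)" for x
  define \<mu> where "\<mu> = density lborel (\<lambda>x. ennreal (exp (- U x) * exp (- W x)))"
  define \<nu> where "\<nu> = density lborel (\<lambda>x. ennreal (exp (- W x)))"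
  define \<phi>U where "\<phi>U = (\<lambda>x. \<phi> x + (grad U x \<bullet> grad F x) / F x)"
  have U1: "Ck 1 U" by (rule smooth_Ck1[OF U_smooth])
  have Fpos: "\<And>x. F x > 0" using F_ge1 by (metis less_le_trans zero_less_one)
  have Fne: "\<And>x. F x \<noteq> 0" using Fpos by (metis less_irrefl)
  have F1: "Ck 1 F" using Ck2_D[OF F_C2] by auto
  note Ud = Ck1_D[OF U1] and Wd = Ck1_D[OF W_C1] and Fd = Ck1_D[OF F1]
  have Um[measurable]: "U \<in> borel_measurable borel" using Ud(2) by (rule borel_measurable_continuous_onI)
  have Wm[measurable]: "W \<in> borel_measurable borel" using Wd(2) by (rule borel_measurable_continuous_onI)
  have \<rho>c: "continuous_on UNIV \<rho>" unfolding \<rho>_def[abs_def] using Ud(2) Wd(2) by (intro continuous_intros)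
  have \<rho>pos: "\<And>x. \<rho> x > 0" by (simp add: \<rho>_def)
  have \<rho>m[measurable]: "\<rho> \<in> borel_measurable borel" using \<rho>c by (rule borel_measurable_continuous_onI)
  interpret P: prob_space \<mu> using \<mu>_prob unfolding \<mu>_def .
  have \<mu>\<rho>: "\<mu> = density lborel (\<lambda>x. ennreal (\<rho> x))" unfolding \<mu>_def \<rho>_def ..
  have nn\<rho>: "(\<integral>\<^sup>+x. ennreal (\<rho> x) \<partial>lborel) = 1"
  proof -
    have "emeasure \<mu> UNIV = 1" using P.emeasure_space_1 by (simp add: \<mu>_def)
    moreover have "emeasure \<mu> UNIV = (\<integral>\<^sup>+x. ennreal (\<rho> x) \<partial>lborel)"
      unfolding \<mu>\<rho> by (subst emeasure_density) auto
    ultimately show ?thesis by simp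
  qed
  have \<rho>i: "integrable lborel \<rho>"
    by (rule integrableI_nonneg) (use nn\<rho> \<rho>pos in \<open>auto intro: less_imp_le\<close>)
  have \<rho>1: "(\<integral>x. \<rho> x \<partial>lborel) = 1"
  proof -
    have "ennreal (\<integral>x. \<rho> x \<partial>lborel) = 1"
      using nn_integral_eq_integral[OF \<rho>i] nn\<rho> \<rho>pos by (simp add: less_imp_le)
    then show ?thesis using \<rho>pos by (metis ennreal_eq_1 integral_nonneg_AE AE_I2 less_imp_le)
  qed
  have Psi: "\<phi>U x - b * indicator (ball 0 R) x \<le> - (LW W F x - grad U x \<bullet> grad F x) / F x" for x
  proof -
    have "- (LW W F x - grad U x \<bullet> grad F x) / F x = - (LW W F x / F x) + (grad U x \<bullet> grad F x) / F x"
      by (simp add: diff_divide_distrib)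
    then show ?thesis using Lyap[rule_format, of x] by (simp add: \<phi>U_def)
  qed
  have \<phi>Uc: "continuous_on UNIV \<phi>U"
    unfolding \<phi>U_def using \<phi>_cont Ud(4) Fd(4) Fd(2) Fne by (intro continuous_intros) auto
  obtain R0 where R0: "\<And>x. norm x \<ge> R0 \<Longrightarrow> \<phi>U x > 0" using \<phi>U_pos unfolding \<phi>U_def by blast
  define R1 where "R1 = max (max R R0) 1"
  have R1: "R1 > 0" "R \<le> R1" "R0 \<le> R1" unfolding R1_def by auto
  have neg: "norm x \<le> R1" if "\<phi>U x < 0" for x
    using R0[of x] that R1 by (cases "norm x \<ge> R0") auto
  obtain M\<phi> where M\<phi>: "\<And>y. y \<in> \<phi>U ` cball 0 R1 \<Longrightarrow> norm y \<le> M\<phi>"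
    using compact_imp_bounded[OF compact_continuous_image[OF continuous_on_subset[OF \<phi>Uc] compact_cball]]
    unfolding bounded_iff by blast
  define m where "m = max M\<phi> 0"
  have m: "m \<ge> 0" unfolding m_def by simp
  have mlow: "\<phi>U x \<ge> - m" for x
  proof (cases "norm x \<le> R1")
    case True
    then have "\<bar>\<phi>U x\<bar> \<le> M\<phi>" using M\<phi>[of "\<phi>U x"] by auto
    then show ?thesis unfolding m_def by linarith
  next
    case False
    then have "\<phi>U x > 0" using R0[of x] R1 by auto
    then show ?thesis using m by linarith
  qed
  obtain K where K: "K > 0" and main: "\<And>f r. Ck 1 f \<Longrightarrow> bounded (range f) \<Longrightarrow>
      integrable lborel (\<lambda>x. exp (- U x) * exp (- W x) * (norm (grad f x))\<^sup>2) \<Longrightarrow> r > 0 \<Longrightarrow>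
      \<exists>c. (\<integral>x. exp (- U x) * exp (- W x) * (f x - c)\<^sup>2 \<partial>lborel)
        \<le> r * K * (\<integral>x. exp (- U x) * exp (- W x) * (norm (grad f x))\<^sup>2 \<partial>lborel)
          + (\<integral>x. exp (- U x) * exp (- W x) * indicator {x. \<phi>U x \<le> 1 / r} x \<partial>lborel) * (Osc f)\<^sup>2"
    using main_estimate[OF W_C1 U1 F_C2 Fpos \<rho>i[unfolded \<rho>_def[abs_def]] \<rho>1[unfolded \<rho>_def] Psi \<phi>Uc mlow m neg R1(2) R1(1) less_imp_le[OF b_pos]]
    by blast
  have "weak_poincare \<mu> (\<lambda>s. ennreal K * gen_inv (hU \<nu> U \<phi>U) s)"
    unfolding weak_poincare_def
  proof (intro conjI allI impI)
    fix s t :: real assume "0 < s" "s \<le> t"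
    then show "ennreal K * gen_inv (hU \<nu> U \<phi>U) t \<le> ennreal K * gen_inv (hU \<nu> U \<phi>U) s"
      unfolding gen_inv_def by (intro mult_left_mono INF_superset_mono) (auto intro: order_trans ennreal_leI)
  next
    fix s :: real and f :: "'a \<Rightarrow> real"
    assume s: "s > 0" and fsb: "smooth f \<and> bounded (range f)"
    have f1: "Ck 1 f" using fsb smooth_Ck1 by blast
    have fb: "bounded (range f)" using fsb by blast
    note fD = Ck1_D[OF f1]
    have fm[measurable]: "f \<in> borel_measurable borel" using fD(2) by (rule borel_measurable_continuous_onI)
    have fm\<mu>: "f \<in> borel_measurable \<mu>" using fm by (simp add: \<mu>_def)
    have gfm[measurable]: "grad f \<in> borel_measurable borel" using fD(4) by (rule borel_measurable_continuous_onI)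
    have \<phi>Um[measurable]: "\<phi>U \<in> borel_measurable borel" using \<phi>Uc by (rule borel_measurable_continuous_onI)
    obtain B0 where B0: "\<And>x. \<bar>f x\<bar> \<le> B0" using fb unfolding bounded_iff by auto
    define Os where "Os = Osc f"
    have Os0: "Os \<ge> 0" using osc_bounds[OF fb, of undefined] by (simp add: Os_def Osc_def)
    have varc: "Var \<mu> f \<le> (\<integral>x. \<rho> x * (f x - c)\<^sup>2 \<partial>lborel)" for c
    proof -
      have "Var \<mu> f \<le> (\<integral>x. (f x - c)\<^sup>2 \<partial>\<mu>)" by (rule var_le[OF _ fm\<mu> B0]) (rule P.prob_space_axioms)
      also have "(\<integral>x. (f x - c)\<^sup>2 \<partial>\<mu>) = (\<integral>x. \<rho> x * (f x - c)\<^sup>2 \<partial>lborel)"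
        unfolding \<mu>\<rho> by (subst integral_density) (auto intro: less_imp_le[OF \<rho>pos])
      finally show ?thesis .
    qed
    have varO: "Var \<mu> f \<le> Os\<^sup>2"
    proof -
      have "Var \<mu> f \<le> (\<integral>x. (f x - Inf (range f))\<^sup>2 \<partial>\<mu>)" by (rule var_le[OF _ fm\<mu> B0]) (rule P.prob_space_axioms)
      also have "\<dots> \<le> (\<integral>x. Os\<^sup>2 \<partial>\<mu>)"
      proof (rule integral_mono)
        show "integrable \<mu> (\<lambda>x. (f x - Inf (range f))\<^sup>2)"
          by (rule P.integrable_const_bound[where B="Os\<^sup>2"])
             (use osc_sq[OF fb order_refl cInf_le_cSup] fm\<mu> in \<open>auto simp: Os_def bounded_imp_bdd_above bounded_imp_bdd_below fb\<close>)
        show "(f x - Inf (range f))\<^sup>2 \<le> Os\<^sup>2" for x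
          using osc_sq[OF fb order_refl, of "x"] osc_bounds[OF fb, of x] unfolding Os_def by auto
      qed simp
      also have "\<dots> = Os\<^sup>2" by (simp add: P.prob_space)
      finally show ?thesis .
    qed
    have varnn: "Var \<mu> f \<ge> 0" unfolding Var_def by (intro integral_nonneg_AE) auto
    define E where "E = (\<integral>\<^sup>+x. ennreal ((norm (grad f x))\<^sup>2) \<partial>\<mu>)"
    have E\<rho>: "E = (\<integral>\<^sup>+x. ennreal (\<rho> x * (norm (grad f x))\<^sup>2) \<partial>lborel)"
      unfolding E_def \<mu>\<rho> by (subst nn_integral_density) (auto simp: ennreal_mult less_imp_le[OF \<rho>pos])
    have goal: "ennreal (Var \<mu> f) \<le> ennreal K * gen_inv (hU \<nu> U \<phi>U) s * E + ennreal (s * Os\<^sup>2)"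
    proof (cases "s \<ge> 1")
      case True
      have "1 * Os\<^sup>2 \<le> s * Os\<^sup>2" using True by (intro mult_right_mono) auto
      then have V: "Var \<mu> f \<le> s * Os\<^sup>2" using varO by linarith
      have "ennreal (Var \<mu> f) \<le> ennreal (s * Os\<^sup>2)" by (rule ennreal_leI[OF V])
      then show ?thesis by (rule add_increasing[OF zero_le])
    next
      case False
      define S where "S = {r. 0 < r \<and> hU \<nu> U \<phi>U r \<le> ennreal s}"
      have gi: "gen_inv (hU \<nu> U \<phi>U) s = (INF r\<in>S. ennreal r)" unfolding gen_inv_def S_def ..
      have setm[measurable]: "{x. \<phi>U x \<le> a} \<in> sets borel" for a by measurable
      have hUge: "emeasure \<mu> {x. \<phi>U x \<le> 1 / r} \<le> hU \<nu> U \<phi>U r" for r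
        unfolding hU_def \<mu>_def \<nu>_def by (rule hU_ge_aux[OF Um Wm setm])
      have sp\<mu>: "space \<mu> = UNIV" by (simp add: \<mu>_def)
      obtain r0 where r0: "r0 > 0" "\<And>r. r \<in> S \<Longrightarrow> r0 \<le> r"
      proof -
        define A where "A n = {x. \<phi>U x \<le> real n}" for n :: nat
        have "(\<lambda>n. emeasure \<mu> (A n)) \<longlonglongrightarrow> emeasure \<mu> (\<Union>n. A n)"
        proof (rule Lim_emeasure_incseq)
          show "range A \<subseteq> sets \<mu>" by (auto simp: A_def \<mu>_def)
          show "incseq A" by (auto simp: incseq_def A_def intro: order_trans)
        qed
        moreover have "(\<Union>n. A n) = UNIV"
        proof -
          have "x \<in> A (nat \<lceil>\<phi>U x\<rceil>)" for x unfolding A_def by simp linarith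
          then show ?thesis by auto
        qed
        moreover have "emeasure \<mu> UNIV = 1" using P.emeasure_space_1 sp\<mu> by simp
        ultimately have lim: "(\<lambda>n. emeasure \<mu> (A n)) \<longlonglongrightarrow> 1" by simp
        have "ennreal s < 1" using False by simp
        from order_tendstoD(1)[OF lim this] obtain n where n: "ennreal s < emeasure \<mu> (A n)"
          by (auto simp: eventually_sequentially)
        show thesis
        proof (rule that[of "1 / (real n + 1)"])
          show "1 / (real n + 1) > 0" by simp
          fix r assume r: "r \<in> S"
          show "1 / (real n + 1) \<le> r"
          proof (rule ccontr)
            assume "\<not> 1 / (real n + 1) \<le> r"
            then have rl: "r < 1 / (real n + 1)" by simp
            have rpos: "r > 0" and hr: "hU \<nu> U \<phi>U r \<le> ennreal s" using r by (auto simp: S_def)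
            have "r * (real n + 1) < 1" using rl by (simp add: field_simps)
            then have "real n \<le> 1 / r" using rpos by (simp add: field_simps)
            then have "A n \<subseteq> {x. \<phi>U x \<le> 1 / r}" unfolding A_def by auto
            then have "emeasure \<mu> (A n) \<le> emeasure \<mu> {x. \<phi>U x \<le> 1 / r}"
              by (intro emeasure_mono) (auto simp: \<mu>_def)
            also have "\<dots> \<le> ennreal s" using hUge[of r] hr by (rule order_trans)
            finally show False using n by simp
          qed
        qed
      qed
      show ?thesis
      proof (cases "S = {}")
        case True
        then have gtop: "gen_inv (hU \<nu> U \<phi>U) s = \<top>" unfolding gi by simp
        show ?thesis
        proof (cases "E = 0")
          case True
          have gc2: "continuous_on UNIV (\<lambda>x. \<rho> x * (norm (grad f x))\<^sup>2)"
            using \<rho>c fD(4) by (intro continuous_intros)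
          have z: "\<rho> x * (norm (grad f x))\<^sup>2 = 0" for x
            by (rule cont_nn_integral_zero[OF gc2]) (use True E\<rho> in \<open>auto simp: less_imp_le[OF \<rho>pos]\<close>)
          have gz: "grad f x = 0" for x using z[of x] \<rho>pos[of x] by simp
          have "(f has_derivative (\<lambda>h. 0)) (at x within UNIV)" for x using fD(1)[of x] gz[of x] by simp
          then obtain k where "\<forall>x\<in>UNIV. f x = k" using has_derivative_zero_constant[of UNIV f] by auto
          then have "Var \<mu> f = 0" by (intro var_const[OF P.prob_space_axioms]) auto
          then show ?thesis by simp
        next
          case False
          then show ?thesis using gtop K by simp
        qed
      next
        case False
        have gge: "ennreal r0 \<le> gen_inv (hU \<nu> U \<phi>U) s" unfolding gi using r0 by (auto intro!: INF_greatest ennreal_leI)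
        obtain r1 where r1: "r1 \<in> S" using False by auto
        have gle: "gen_inv (hU \<nu> U \<phi>U) s \<le> ennreal r1" unfolding gi using r1 by (rule INF_lower)
        show ?thesis
        proof (cases "E = \<top>")
          case True
          have "gen_inv (hU \<nu> U \<phi>U) s \<noteq> 0"
          proof
            assume "gen_inv (hU \<nu> U \<phi>U) s = 0"
            then have "ennreal r0 \<le> 0" using gge by simp
            then show False using r0 by simp
          qed
          then show ?thesis using True K by simp
        next
          case False
          define Er where "Er = enn2real E"
          have EEr: "E = ennreal Er" using False by (simp add: Er_def less_top)
          have Er0: "Er \<ge> 0" by (simp add: Er_def)
          have iG: "integrable lborel (\<lambda>x. exp (- U x) * exp (- W x) * (norm (grad f x))\<^sup>2)"
          proof (rule integrableI_nonneg)
            show "(\<lambda>x. exp (- U x) * exp (- W x) * (norm (grad f x))\<^sup>2) \<in> borel_measurable lborel" by measurable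
            show "AE x in lborel. 0 \<le> exp (- U x) * exp (- W x) * (norm (grad f x))\<^sup>2" by simp
            show "(\<integral>\<^sup>+x. ennreal (exp (- U x) * exp (- W x) * (norm (grad f x))\<^sup>2) \<partial>lborel) < \<infinity>"
              using E\<rho> False unfolding \<rho>_def by (simp add: less_top)
          qed
          have intE: "(\<integral>x. exp (- U x) * exp (- W x) * (norm (grad f x))\<^sup>2 \<partial>lborel) = Er"
          proof -
            have "ennreal (\<integral>x. exp (- U x) * exp (- W x) * (norm (grad f x))\<^sup>2 \<partial>lborel) = ennreal Er"
              using nn_integral_eq_integral[OF iG] E\<rho> EEr unfolding \<rho>_def by simp
            then show ?thesis using Er0 by (subst (asm) ennreal_inj) (auto intro!: integral_nonneg_AE)
          qed
          have VS: "Var \<mu> f \<le> r * K * Er + s * Os\<^sup>2" if r: "r \<in> S" for r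
          proof -
            have rpos: "r > 0" and hr: "hU \<nu> U \<phi>U r \<le> ennreal s" using r by (auto simp: S_def)
            obtain c where c: "(\<integral>x. exp (- U x) * exp (- W x) * (f x - c)\<^sup>2 \<partial>lborel)
              \<le> r * K * (\<integral>x. exp (- U x) * exp (- W x) * (norm (grad f x))\<^sup>2 \<partial>lborel)
                + (\<integral>x. exp (- U x) * exp (- W x) * indicator {x. \<phi>U x \<le> 1 / r} x \<partial>lborel) * (Osc f)\<^sup>2"
              using main[OF f1 fb iG rpos] by blast
            have iA: "integrable lborel (\<lambda>x. \<rho> x * indicator {x. \<phi>U x \<le> 1 / r} x)"
            proof (rule Bochner_Integration.integrable_bound[OF \<rho>i])
              show "(\<lambda>x. \<rho> x * indicator {x. \<phi>U x \<le> 1 / r} x) \<in> borel_measurable lborel" by measurable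
              show "AE x in lborel. norm (\<rho> x * indicator {x. \<phi>U x \<le> 1 / r} x) \<le> norm (\<rho> x)"
                using \<rho>pos by (auto simp: indicator_def less_imp_le)
            qed
            have "ennreal (\<integral>x. \<rho> x * indicator {x. \<phi>U x \<le> 1 / r} x \<partial>lborel) = (\<integral>\<^sup>+x. ennreal (\<rho> x * indicator {x. \<phi>U x \<le> 1 / r} x) \<partial>lborel)"
              by (rule nn_integral_eq_integral[OF iA, symmetric]) (auto simp: less_imp_le[OF \<rho>pos])
            also have "\<dots> = emeasure \<mu> {x. \<phi>U x \<le> 1 / r}"
              unfolding \<mu>\<rho> by (subst emeasure_density) (auto intro!: nn_integral_cong simp: indicator_def)
            also have "\<dots> \<le> ennreal s" using hUge[of r] hr by (rule order_trans)
            finally have muA: "(\<integral>x. \<rho> x * indicator {x. \<phi>U x \<le> 1 / r} x \<partial>lborel) \<le> s" using s by simp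
            have "Var \<mu> f \<le> (\<integral>x. \<rho> x * (f x - c)\<^sup>2 \<partial>lborel)" by (rule varc)
            also have "\<dots> \<le> r * K * Er + (\<integral>x. \<rho> x * indicator {x. \<phi>U x \<le> 1 / r} x \<partial>lborel) * Os\<^sup>2"
              using c intE unfolding \<rho>_def Os_def by simp
            also have "\<dots> \<le> r * K * Er + s * Os\<^sup>2" using muA by (simp add: mult_right_mono)
            finally show ?thesis .
          qed
          have gfin: "gen_inv (hU \<nu> U \<phi>U) s < \<top>" using gle by (simp add: le_less_trans)
          define g where "g = enn2real (gen_inv (hU \<nu> U \<phi>U) s)"
          have gE: "gen_inv (hU \<nu> U \<phi>U) s = ennreal g" using gfin by (simp add: g_def)
          have g0: "g \<ge> 0" by (simp add: g_def)
          have Vg: "Var \<mu> f \<le> K * g * Er + s * Os\<^sup>2"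
          proof (rule field_le_epsilon)
            fix e :: real assume e: "e > 0"
            define \<epsilon> where "\<epsilon> = e / (K * Er + 1)"
            have KE: "K * Er \<ge> 0" using K Er0 by simp
            have \<epsilon>pos: "\<epsilon> > 0" unfolding \<epsilon>_def using e KE by simp
            have "gen_inv (hU \<nu> U \<phi>U) s < ennreal (g + \<epsilon>)" using gE \<epsilon>pos g0 by (simp add: ennreal_lessI)
            then obtain r where r: "r \<in> S" and rl': "ennreal r < ennreal (g + \<epsilon>)" unfolding gi by (auto simp: INF_less_iff)
            have rl: "r < g + \<epsilon>" using rl' r by (auto simp: S_def ennreal_less_iff)
            have "Var \<mu> f \<le> r * K * Er + s * Os\<^sup>2" by (rule VS[OF r])
            also have "r * K * Er \<le> (g + \<epsilon>) * (K * Er)" using rl KE by (simp add: mult.assoc mult_right_mono)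
            also have "(g + \<epsilon>) * (K * Er) = K * g * Er + \<epsilon> * (K * Er)" by (simp add: algebra_simps)
            also have "\<epsilon> * (K * Er) \<le> e"
            proof -
              have "\<epsilon> * (K * Er) = e * (K * Er / (K * Er + 1))" unfolding \<epsilon>_def by simp
              also have "\<dots> \<le> e * 1" using e KE by (intro mult_left_mono) auto
              finally show ?thesis by simp
            qed
            finally show "Var \<mu> f \<le> K * g * Er + s * Os\<^sup>2 + e" by simp
          qed
          have "ennreal (Var \<mu> f) \<le> ennreal (K * g * Er + s * Os\<^sup>2)" using Vg by (rule ennreal_leI)
          also have "\<dots> = ennreal K * gen_inv (hU \<nu> U \<phi>U) s * E + ennreal (s * Os\<^sup>2)"
            using gE EEr K g0 Er0 s by (simp add: ennreal_mult ennreal_plus)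
          finally show ?thesis .
        qed
      qed
    qed
    then show "ennreal (Var \<mu> f) \<le> ennreal K * gen_inv (hU \<nu> U \<phi>U) s * (\<integral>\<^sup>+x. ennreal ((norm (grad f x))\<^sup>2) \<partial>\<mu>) + ennreal (s * (Osc f)\<^sup>2)"
      unfolding E_def Os_def .
  qed
  then show ?thesis using K unfolding \<mu>_def \<nu>_def \<phi>U_def by blast
qed

end
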